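(* Let $J$ be an indecomposable $W_n$-module in category $\mathcal{J}$. Then $J$ is a polynomial module. More precisely, there are $\lambda\in\mathbb{C}^n$ and a finite-dimensional subspace $U=J_\lambda$ of $J$ such that multiplication gives an isomorphism $\mathcal{F}(\mathbb{T}^n)\otimes U\cong J$. Define $D_j(s)\in\mathrm{End}\,U$ by $D_j(s)u=e_{-s}\,(d_j(s)u)$. Then for all $j=1,\dots,n$, $s,m\in\mathbb{Z}^n$ and $v\in U$, $$d_j(s)(e_m v)=e_{m+s}\big(m_j\,\mathrm{Id}+D_j(s)\big)v .$$ Moreover, the operators $D_j(s)$ depend polynomially on $s\in\mathbb{Z}^n$, and $D_j(0)=\lambda_j\,\mathrm{Id}$.
   Context: Let $n\ge 1$. Let $\mathcal{F}(\mathbb{T}^n)$ be the commutative algebra with $\mathbb{C}$-basis $e_m=e^{2\pi i m\cdot x}$, $m\in\mathbb{Z}^n$, and $e_me_k=e_{m+k}$. Let $W_n$ be the Lie algebra with $\mathbb{C}$-basis $d_j(s)=\frac{1}{2\pi i}e^{2\pi i s\cdot x}\frac{\partial}{\partial x^j}$, for $j=1,\dots,n$ and $s\in\mathbb{Z}^n$, and bracket $$[d_j(s),d_k(m)]=m_j\,d_k(s+m)-s_k\,d_j(s+m).$$ $W_n$ acts on $\mathcal{F}(\mathbb{T}^n)$ by derivations via $d_j(s)e_m=m_je_{m+s}$. Write $d_j=d_j(0)$. Category $\mathcal{J}$ consists of $W_n$-modules $J$ that are also $\mathcal{F}(\mathbb{T}^n)$-modules and satisfy: (J1) each $d_j$ acts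 diagonalizably on $J$; (J2) $J$ is a free $\mathcal{F}(\mathbb{T}^n)$-module of finite rank; (J3) $u(fw)=(uf)w+f(uw)$ for all $u\in W_n$, $f\in\mathcal{F}(\mathbb{T}^n)$, $w\in J$. For $\mu\in\mathbb{C}^n$, the weight space is $J_\mu=\{w\in J: d_jw=\mu_jw \text{ for all } j\}$. Submodules are subspaces invariant under both $W_n$ and $\mathcal{F}(\mathbb{T}^n)$. Indecomposable modules are nonzero. A module $J$ in $\mathcal{J}$ is a polynomial module if there is a basis $v_1,\dots,v_k$ of $J$ over $\mathcal{F}(\mathbb{T}^n)$ such that $$d_j(s)(e_mv_r)=\sum_{\ell}f_{jr\ell}(s,m)\,e_{m+s}v_\ell$$ with each $f_{jr\ell}$ a polynomial in $s,m\in\mathbb{Z}^n$. *)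

theory Defs
  imports "HOL-Analysis.Analysis"
begin

text \<open>An abstract complex vector space J is given by a type 'v with scalar
multiplication sc.  Z^n is int^'n (n = CARD('n) >= 1).  E m is the action of
e_m in F(T^n), D j s the action of d_j(s) in W_n.\<close>

definition F_basis ::
  "(complex \<Rightarrow> 'v::ab_group_add \<Rightarrow> 'v) \<Rightarrow> (int^'n \<Rightarrow> 'v \<Rightarrow> 'v) \<Rightarrow> 'v set \<Rightarrow> bool" where
  "F_basis sc E V \<longleftrightarrow>
     inj_on (\<lambda>(m, v). E m v) (UNIV \<times> V) \<and>
     \<not> module.dependent sc ((\<lambda>(m, v). E m v) ` (UNIV \<times> V)) \<and>
     module.span sc ((\<lambda>(m, v). E m v) ` (UNIV \<times> V)) = UNIV"

definition cat_J ::
  "(complex \<Rightarrow> 'v::ab_group_add \<Rightarrow> 'v) \<Rightarrow> (int^'n \<Rightarrow> 'v \<Rightarrow> 'v)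
     \<Rightarrow> ('n \<Rightarrow> int^'n \<Rightarrow> 'v \<Rightarrow> 'v) \<Rightarrow> bool" where
  "cat_J sc E D \<longleftrightarrow>
     vector_space sc \<and>
     (\<forall>m. Vector_Spaces.linear sc sc (E m)) \<and>
     (\<forall>j s. Vector_Spaces.linear sc sc (D j s)) \<and>
     \<comment> \<open>F(T^n)-module: e_0 acts as identity, e_m e_k = e_(m+k)\<close>
     (\<forall>w. E 0 w = w) \<and>
     (\<forall>m k w. E m (E k w) = E (m + k) w) \<and>
     \<comment> \<open>W_n-module: the bracket acts as commutator\<close>
     (\<forall>j k s m w. D j s (D k m w) - D k m (D j s w) =
        sc (of_int (m $ j)) (D k (s + m) w) - sc (of_int (s $ k)) (D j (s + m) w)) \<and>
     \<comment> \<open>(J3) on basis elements (general case by linearity)\<close>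
     (\<forall>j s m w. D j s (E m w) = sc (of_int (m $ j)) (E (m + s) w) + E m (D j s w)) \<and>
     \<comment> \<open>(J1) each d_j = d_j(0) is diagonalizable\<close>
     (\<forall>j. module.span sc {w. \<exists>c. D j 0 w = sc c w} = UNIV) \<and>
     \<comment> \<open>(J2) free F(T^n)-module of finite rank\<close>
     (\<exists>V. finite V \<and> F_basis sc E V)"

definition submod ::
  "(complex \<Rightarrow> 'v::ab_group_add \<Rightarrow> 'v) \<Rightarrow> (int^'n \<Rightarrow> 'v \<Rightarrow> 'v)
     \<Rightarrow> ('n \<Rightarrow> int^'n \<Rightarrow> 'v \<Rightarrow> 'v) \<Rightarrow> 'v set \<Rightarrow> bool" where
  "submod sc E D S \<longleftrightarrow> module.subspace sc S \<and>
     (\<forall>m. E m ` S \<subseteq> S) \<and> (\<forall>j s. D j s ` S \<subseteq> S)"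

definition indecomposable ::
  "(complex \<Rightarrow> 'v::ab_group_add \<Rightarrow> 'v) \<Rightarrow> (int^'n \<Rightarrow> 'v \<Rightarrow> 'v)
     \<Rightarrow> ('n \<Rightarrow> int^'n \<Rightarrow> 'v \<Rightarrow> 'v) \<Rightarrow> bool" where
  "indecomposable sc E D \<longleftrightarrow> (UNIV :: 'v set) \<noteq> {0} \<and>
     \<not> (\<exists>S T. submod sc E D S \<and> submod sc E D T \<and> S \<noteq> {0} \<and> T \<noteq> {0} \<and>
            S \<inter> T = {0} \<and> {x + y | x y. x \<in> S \<and> y \<in> T} = UNIV)"

definition monomial :: "int^'n \<Rightarrow> nat^'n \<Rightarrow> complex" where
  "monomial s \<alpha> = (\<Prod>j\<in>UNIV. of_int (s $ j) ^ (\<alpha> $ j))"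

definition poly_fun2 :: "(int^'n \<Rightarrow> int^'n \<Rightarrow> complex) \<Rightarrow> bool" where
  "poly_fun2 f \<longleftrightarrow> (\<exists>A :: ((nat^'n) \<times> (nat^'n)) set. \<exists>c. finite A \<and>
     (\<forall>s m. f s m = (\<Sum>(\<alpha>, \<beta>)\<in>A. c (\<alpha>, \<beta>) * monomial s \<alpha> * monomial m \<beta>)))"

definition polynomial_module ::
  "(complex \<Rightarrow> 'v::ab_group_add \<Rightarrow> 'v) \<Rightarrow> (int^'n \<Rightarrow> 'v \<Rightarrow> 'v)
     \<Rightarrow> ('n \<Rightarrow> int^'n \<Rightarrow> 'v \<Rightarrow> 'v) \<Rightarrow> bool" where
  "polynomial_module sc E D \<longleftrightarrow> (\<exists>vs :: 'v list. distinct vs \<and> F_basis sc E (set vs) \<and>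
     (\<exists>f :: 'n \<Rightarrow> nat \<Rightarrow> nat \<Rightarrow> int^'n \<Rightarrow> int^'n \<Rightarrow> complex.
        (\<forall>j r l. poly_fun2 (f j r l)) \<and>
        (\<forall>j s m r. r < length vs \<longrightarrow>
           D j s (E m (vs ! r)) = (\<Sum>l<length vs. sc (f j r l s m) (E (m + s) (vs ! l))))))"

definition weight_space ::
  "(complex \<Rightarrow> 'v::ab_group_add \<Rightarrow> 'v) \<Rightarrow> ('n \<Rightarrow> int^'n \<Rightarrow> 'v \<Rightarrow> 'v) \<Rightarrow> complex^'n \<Rightarrow> 'v set" where
  "weight_space sc D \<mu> = {w. \<forall>j. D j 0 w = sc (\<mu> $ j) w}"

definition Dop :: "(int^'n \<Rightarrow> 'v \<Rightarrow> 'v) \<Rightarrow> ('n \<Rightarrow> int^'n \<Rightarrow> 'v \<Rightarrow> 'v) \<Rightarrow> 'n \<Rightarrow> int^'n \<Rightarrow> 'v \<Rightarrow> 'v" where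
  "Dop E D j s u = E (- s) (D j s u)"

end

theory Submission
  imports Defs "HOL-Computational_Algebra.Polynomial" "HOL-Computational_Algebra.Fundamental_Theorem_Algebra"
begin

locale vs = vector_space sc for sc :: "complex \<Rightarrow> 'v::ab_group_add \<Rightarrow> 'v"
begin

definition lin :: "('v \<Rightarrow> 'v) \<Rightarrow> bool" where
  "lin f \<longleftrightarrow> (\<forall>x y. f (x + y) = f x + f y) \<and> (\<forall>c x. f (sc c x) = sc c (f x))"

lemma lin_iff: "Vector_Spaces.linear sc sc f \<longleftrightarrow> lin f"
  unfolding lin_def module_hom_iff_linear[symmetric] module_hom_iff
  using module_axioms by auto

lemma linD: assumes "lin f" shows "f (x + y) = f x + f y" "f (sc c x) = sc c (f x)"
  using assms unfolding lin_def by auto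

lemma lin_zero: "lin f \<Longrightarrow> f 0 = 0"
  by (metis linD(2) scale_zero_left)

lemma lin_neg: "lin f \<Longrightarrow> f (- x) = - f x"
  by (metis add_eq_0_iff2 add.right_inverse linD(1) lin_zero)

lemma lin_diff: "lin f \<Longrightarrow> f (x - y) = f x - f y"
  by (metis diff_conv_add_uminus linD(1) lin_neg)

lemma lin_sum: "lin f \<Longrightarrow> f (sum g A) = (\<Sum>a\<in>A. f (g a))"
  by (induction A rule: infinite_finite_induct) (auto simp: lin_zero linD)

lemma lin_id: "lin (\<lambda>x. x)" by (simp add: lin_def)
lemma lin_0: "lin (\<lambda>x. 0)" by (simp add: lin_def)
lemma lin_comp: "lin f \<Longrightarrow> lin g \<Longrightarrow> lin (\<lambda>x. f (g x))" by (simp add: lin_def)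
lemma lin_add: "lin f \<Longrightarrow> lin g \<Longrightarrow> lin (\<lambda>x. f x + g x)"
  by (simp add: lin_def scale_right_distrib algebra_simps)
lemma lin_sub: "lin f \<Longrightarrow> lin g \<Longrightarrow> lin (\<lambda>x. f x - g x)"
  by (simp add: lin_def scale_right_diff_distrib algebra_simps)
lemma lin_scale: "lin f \<Longrightarrow> lin (\<lambda>x. sc c (f x))"
  by (simp add: lin_def scale_right_distrib scale_left_commute)
lemma lin_sumf: "(\<And>i. i \<in> I \<Longrightarrow> lin (f i)) \<Longrightarrow> lin (\<lambda>x. \<Sum>i\<in>I. f i x)"
  by (induction I rule: infinite_finite_induct) (auto intro: lin_0 lin_add)

definition ev :: "(int \<Rightarrow> 'v) \<Rightarrow> int \<Rightarrow> complex poly \<Rightarrow> 'v" where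
  "ev g a p = (\<Sum>t\<le>degree p. sc (coeff p t) (g (a + int t)))"

lemma ev_bound: assumes "degree p \<le> K"
  shows "ev g a p = (\<Sum>t\<le>K. sc (coeff p t) (g (a + int t)))"
  unfolding ev_def
  by (rule sum.mono_neutral_left) (use assms coeff_eq_0 in \<open>auto simp: not_le\<close>)

lemma ev_add: "ev g a (p + q) = ev g a p + ev g a q"
proof -
  let ?K = "max (degree p) (degree q)"
  have "degree (p + q) \<le> ?K" by (rule degree_add_le) auto
  then show ?thesis
    by (simp add: ev_bound[of _ ?K] sum.distrib scale_left_distrib)
qed

lemma ev_smult: "ev g a (smult c p) = sc c (ev g a p)"
proof -
  have "degree (smult c p) \<le> degree p" by simp
  then show ?thesis
    by (simp add: ev_bound[of _ "degree p"] ev_def scale_sum_right)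
qed

lemma ev_0[simp]: "ev g a 0 = 0"
  by (simp add: ev_def)

lemma ev_neg: "ev g a (- p) = - ev g a p"
  using ev_add[of g a p "-p"] by (simp add: eq_neg_iff_add_eq_0 add.commute)

lemma ev_diff: "ev g a (p - q) = ev g a p - ev g a q"
  using ev_add[of g a p "-q"] ev_neg by simp

lemma ev_pCons: "ev g a (pCons c p) = sc c (g a) + ev g (a + 1) p"
proof -
  have d: "degree (pCons c p) \<le> Suc (degree p)" by simp
  have "ev g a (pCons c p) = (\<Sum>t\<le>Suc (degree p). sc (coeff (pCons c p) t) (g (a + int t)))"
    by (rule ev_bound[OF d])
  also have "\<dots> = sc c (g a) + (\<Sum>t\<le>degree p. sc (coeff p t) (g (a + 1 + int t)))"
    by (subst sum.atMost_Suc_shift) (simp add: add_ac)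
  finally show ?thesis by (simp add: ev_def)
qed

lemma ev_const: "ev g a [:c:] = sc c (g a)"
  by (simp add: ev_pCons)

lemma ev_pCons0: "ev g a (pCons 0 p) = ev g (a + 1) p"
  by (simp add: ev_pCons)

lemma ev_monom: "ev g a (monom c i) = sc c (g (a + int i))"
  by (induction i arbitrary: a) (auto simp: ev_const monom_Suc ev_pCons0 add_ac monom_0)

lemma ev_cong: "(\<And>x. g1 x = g2 x) \<Longrightarrow> ev g1 a p = ev g2 a p"
  by (simp add: ev_def)

lemma ev_lin: "lin f \<Longrightarrow> ev (\<lambda>x. f (g x)) a p = f (ev g a p)"
  by (simp add: ev_def lin_sum linD)

lemma ev_addf: "ev (\<lambda>x. g1 x + g2 x) a p = ev g1 a p + ev g2 a p"
  by (simp add: ev_def sum.distrib scale_right_distrib)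

lemma ev_diff_f: "ev (\<lambda>x. g1 x - g2 x) a p = ev g1 a p - ev g2 a p"
  by (simp add: ev_def sum_subtractf scale_right_diff_distrib)

lemma ev_scf: "ev (\<lambda>x. sc c (g x)) a p = sc c (ev g a p)"
  by (simp add: ev_def scale_sum_right scale_left_commute mult.commute)

lemma ev_sumf: "ev (\<lambda>x. \<Sum>i\<in>I. g i x) a p = (\<Sum>i\<in>I. ev (g i) a p)"
  by (induction I rule: infinite_finite_induct) (auto simp: ev_addf ev_def)

lemma ev_mult: "ev g a (p * q) = ev (\<lambda>b. ev g b p) a q"
proof (induction q arbitrary: a rule: pCons_induct)
  case 0
  then show ?case by simp
next
  case (pCons c q)
  have "p * pCons c q = smult c p + pCons 0 (p * q)"
    by (simp add: mult_pCons_right)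
  then show ?case
    by (simp add: ev_add ev_smult ev_pCons0 pCons.IH ev_pCons)
qed

lemma ev_weight:
  "ev (\<lambda>x. sc (of_int x) (g x)) a p = ev g a (smult (of_int a) p + pCons 0 (pderiv p))"
proof (induction p arbitrary: a rule: pCons_induct)
  case 0
  then show ?case by simp
next
  case (pCons c p)
  have e: "smult (of_int a) (pCons c p) + pCons 0 (pderiv (pCons c p))
     = pCons (of_int a * c) (smult (of_int (a + 1)) p + pCons 0 (pderiv p))"
    by (simp add: pderiv_pCons algebra_simps smult_add_left)
  show ?case
    unfolding e ev_pCons pCons.IH[symmetric] by (simp add: scale_scale mult.commute)
qed

end

lemma gauss_elim:
  fixes x :: "'i \<Rightarrow> 'k \<Rightarrow> complex"
  assumes "finite K" "finite I" "card K < card I"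
  shows "\<exists>c. (\<exists>i\<in>I. c i \<noteq> 0) \<and> (\<forall>k\<in>K. (\<Sum>i\<in>I. c i * x i k) = 0)"
  using assms
proof (induction K arbitrary: I x rule: finite_induct)
  case empty
  then have "I \<noteq> {}" by auto
  then show ?case by (intro exI[of _ "\<lambda>_. 1"]) auto
next
  case (insert k K)
  show ?case
  proof (cases "\<forall>i\<in>I. x i k = 0")
    case True
    from insert.IH[of I x] insert.prems insert.hyps obtain c where
      c: "\<exists>i\<in>I. c i \<noteq> 0" "\<forall>k\<in>K. (\<Sum>i\<in>I. c i * x i k) = 0" by auto
    show ?thesis using c True by (intro exI[of _ c]) auto
  next
    case False
    then obtain i0 where i0: "i0 \<in> I" "x i0 k \<noteq> 0" by auto
    define I' where "I' = I - {i0}"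
    define y where "y i k' = x i k' - (x i k / x i0 k) * x i0 k'" for i k'
    have cI': "card I' = card I - 1" using i0 insert.prems by (simp add: I'_def)
    have "card K < card I'" using cI' insert.prems insert.hyps by auto
    from insert.IH[of I' y] this insert.prems obtain c' where
      c': "\<exists>i\<in>I'. c' i \<noteq> 0" "\<forall>k\<in>K. (\<Sum>i\<in>I'. c' i * y i k) = 0" by (auto simp: I'_def)
    define c where "c i = (if i = i0 then - (\<Sum>j\<in>I'. c' j * x j k) / x i0 k else c' i)" for i
    have key: "(\<Sum>i\<in>I. c i * x i k') = (\<Sum>i\<in>I'. c' i * y i k')" for k'
    proof -
      have "(\<Sum>i\<in>I. c i * x i k') = c i0 * x i0 k' + (\<Sum>i\<in>I'. c i * x i k')"
        using i0 insert.prems by (simp add: I'_def sum.remove)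
      also have "(\<Sum>i\<in>I'. c i * x i k') = (\<Sum>i\<in>I'. c' i * x i k')"
        by (rule sum.cong) (auto simp: c_def I'_def)
      also have "c i0 * x i0 k' = - (\<Sum>j\<in>I'. c' j * (x j k / x i0 k) * x i0 k')"
        by (simp add: c_def sum_divide_distrib sum_distrib_right sum_negf)
      finally show ?thesis
        by (simp add: y_def sum_subtractf algebra_simps)
    qed
    have yk: "y i k = 0" for i using i0 by (simp add: y_def)
    show ?thesis
    proof (intro exI[of _ c] conjI)
      show "\<exists>i\<in>I. c i \<noteq> 0" using c'(1) by (auto simp: c_def I'_def)
      show "\<forall>k'\<in>insert k K. (\<Sum>i\<in>I. c i * x i k') = 0"
        using c'(2) by (auto simp: key yk)
    qed
  qed
qed

lemma poly_ideal_lemma: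
  fixes Q :: "complex poly set"
  assumes mult: "\<And>p q. p \<in> Q \<Longrightarrow> p * q \<in> Q"
    and diff: "\<And>p q. p \<in> Q \<Longrightarrow> q \<in> Q \<Longrightarrow> p - q \<in> Q"
    and divz: "\<And>p. pCons 0 p \<in> Q \<Longrightarrow> p \<in> Q"
    and der: "\<And>p. p \<in> Q \<Longrightarrow> [:-1,1:] * pCons 0 (pderiv p) \<in> Q"
    and nz: "\<exists>p\<in>Q. p \<noteq> 0"
  shows "\<exists>N. [:-1,1:]^N \<in> Q"
proof -
  define d where "d = (LEAST d. \<exists>p\<in>Q. p \<noteq> 0 \<and> degree p = d)"
  have "\<exists>p\<in>Q. p \<noteq> 0 \<and> degree p = d"
    unfolding d_def by (rule LeastI_ex) (use nz in blast)
  then obtain h where h: "h \<in> Q" "h \<noteq> 0" "degree h = d" by auto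
  have hmin: "degree h \<le> degree p" if "p \<in> Q" "p \<noteq> 0" for p
    unfolding h(3) d_def by (rule Least_le) (use that in blast)
  have hdvd: "h dvd p" if "p \<in> Q" for p
  proof -
    have "p mod h = p - (p div h) * h" by (rule minus_div_mult_eq_mod[symmetric])
    also have "\<dots> \<in> Q" using diff[OF that mult[OF h(1), of "p div h"]] by (simp add: mult.commute)
    finally have m: "p mod h \<in> Q" .
    show ?thesis
    proof (rule ccontr)
      assume "\<not> h dvd p"
      then have "p mod h \<noteq> 0" by (simp add: mod_eq_0_iff_dvd)
      with degree_mod_less'[OF h(2) this] hmin[OF m] show False by auto
    qed
  qed
  have h0: "poly h 0 \<noteq> 0"
  proof
    assume "poly h 0 = 0"
    obtain c h' where hc: "h = pCons c h'" by (cases h)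
    have "c = 0" using \<open>poly h 0 = 0\<close> hc by simp
    then have "h' \<in> Q" using divz h(1) hc by simp
    moreover have "h' \<noteq> 0" using h(2) hc \<open>c = 0\<close> by auto
    ultimately have "degree h \<le> degree h'" using hmin by auto
    moreover have "degree h = Suc (degree h')" using hc \<open>c = 0\<close> \<open>h' \<noteq> 0\<close> by simp
    ultimately show False by simp
  qed
  have roots: "r = 1" if r: "poly h r = 0" for r
  proof (rule ccontr)
    assume r1: "r \<noteq> 1"
    have r0: "r \<noteq> 0" using r h0 by auto
    have dh: "degree h \<noteq> 0"
    proof
      assume "degree h = 0"
      then obtain c where "h = [:c:]" by (metis degree_eq_zeroE)
      then show False using r h(2) by auto
    qed
    then have pd: "pderiv h \<noteq> 0" by (simp add: pderiv_eq_0_iff)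
    define X where "X = [:-1,1:] * ([:0,1:] * pderiv h)"
    have X: "X = [:-1,1:] * pCons 0 (pderiv h)" by (simp add: X_def)
    have XQ: "X \<in> Q" unfolding X by (rule der[OF h(1)])
    have Xnz: "X \<noteq> 0" using pd unfolding X_def by (metis mult_eq_0_iff pCons_eq_0_iff one_neq_zero)
    have "order r h \<le> order r X" by (rule dvd_imp_order_le[OF Xnz hdvd[OF XQ]])
    also have "order r X = order r [:-1,1:] + (order r [:0,1:] + order r (pderiv h))"
      using Xnz unfolding X_def by (subst order_mult, simp, subst order_mult, auto)
    also have "order r [:-1,1:] = 0" using r1 order_root[of "[:-1,1:]" r] by auto
    also have "order r [:0,1:] = 0" using r0 order_root[of "[:0,1:]" r] by auto
    also have "order r h = Suc (order r (pderiv h))" by (rule order_pderiv[OF h(2) r])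
    finally show False by simp
  qed
  define k where "k = order 1 h"
  obtain q where q: "h = [:-1,1:] ^ k * q" "\<not> [:-1,1:] dvd q"
    using order_decomp[OF h(2), of 1] unfolding k_def by auto
  have "degree q = 0"
  proof (rule ccontr)
    assume "degree q \<noteq> 0"
    then have "\<not> constant (poly q)" by (simp add: constant_degree)
    then obtain z where z: "poly q z = 0" using fundamental_theorem_of_algebra by blast
    then have "poly h z = 0" using q(1) by simp
    then have "z = 1" by (rule roots)
    then show False using z q(2) by (simp add: poly_eq_0_iff_dvd)
  qed
  then obtain c where c: "q = [:c:]" by (metis degree_eq_zeroE)
  have "c \<noteq> 0" using h(2) q(1) c by auto
  have "h * [:1/c:] \<in> Q" by (rule mult[OF h(1)])
  also have "h * [:1/c:] = [:-1,1:] ^ k"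
    using q(1) c \<open>c \<noteq> 0\<close> by (simp add: mult.assoc)
  finally show ?thesis by blast
qed

context vs begin

lemma ev_const_fun: "ev (\<lambda>x. v) a p = sc (poly p 1) v"
  by (simp add: ev_def poly_altdef scale_sum_left)

lemma ev_shift: "ev (\<lambda>y. g (x + y)) b q = ev g (x + b) q"
  by (simp add: ev_def add.assoc)

lemma ev_swap: "ev (\<lambda>x. ev (\<lambda>y. F x y) b q) a p = ev (\<lambda>y. ev (\<lambda>x. F x y) a p) b q"
  unfolding ev_def scale_sum_right
  by (subst sum.swap) (simp add: scale_left_commute mult.commute)

end

locale core = vs sc for sc :: "complex \<Rightarrow> 'v::ab_group_add \<Rightarrow> 'v" +
  fixes U :: "'v set" and \<tau> :: "int \<Rightarrow> 'v \<Rightarrow> 'v" and Bs :: "'v set"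
  assumes U_sub: "subspace U"
    and \<tau>_lin: "lin (\<tau> x)"
    and \<tau>_U: "u \<in> U \<Longrightarrow> \<tau> x u \<in> U"
    and R1: "u \<in> U \<Longrightarrow> \<tau> x (\<tau> y u) - \<tau> y (\<tau> x u) =
       sc (of_int (y - x)) (\<tau> (x + y) u) - sc (of_int y) (\<tau> y u) + sc (of_int x) (\<tau> x u)"
    and Bs_fin: "finite Bs" and Bs_ind: "independent Bs" and Bs_span: "span Bs = U"
begin

definition R :: "int \<Rightarrow> complex poly \<Rightarrow> 'v \<Rightarrow> 'v" where
  "R a p u = ev (\<lambda>x. \<tau> x u) a p"

lemma R_lin: "lin (R a p)"
  unfolding R_def ev_def
  by (intro lin_sumf lin_scale lin_comp[OF _ \<tau>_lin] lin_id)

lemma R_U: "u \<in> U \<Longrightarrow> R a p u \<in> U"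
  unfolding R_def ev_def
  by (intro subspace_sum[OF U_sub] subspace_scale[OF U_sub] \<tau>_U)

definition wt :: "int \<Rightarrow> complex poly \<Rightarrow> complex poly" where
  "wt a p = smult (of_int a) p + pCons 0 (pderiv p)"

lemma R_shift_mult: "ev (\<lambda>x. R (x + b) W u) a p = R (a + b) (W * p) u"
proof -
  have "R (a + b) (W * p) u = ev (\<lambda>c. ev (\<lambda>y. \<tau> y u) c W) (b + a) p"
    unfolding R_def by (simp add: ev_mult add.commute)
  also have "\<dots> = ev (\<lambda>x. ev (\<lambda>y. \<tau> y u) (b + x) W) a p"
    by (rule ev_shift[symmetric])
  finally show ?thesis by (simp add: R_def add.commute)
qed

lemma R_diff: "R c (P1 - P2) u = R c P1 u - R c P2 u"
  by (simp add: R_def ev_diff)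

lemma bracket:
  assumes u: "u \<in> U"
  shows "R a p (R b q u) - R b q (R a p u) =
    R (a + b) (wt b q * p - q * wt a p) u - sc (poly p 1) (R b (wt b q) u)
      + sc (poly q 1) (R a (wt a p) u)"
proof -
  have l1: "R a p (R b q u) = ev (\<lambda>x. ev (\<lambda>y. \<tau> x (\<tau> y u)) b q) a p"
    unfolding R_def by (rule ev_cong) (simp add: ev_lin[OF \<tau>_lin, symmetric])
  have l2: "R b q (R a p u) = ev (\<lambda>x. ev (\<lambda>y. \<tau> y (\<tau> x u)) b q) a p"
    unfolding R_def by (subst ev_swap) (simp add: ev_lin[OF \<tau>_lin, symmetric])
  have inner: "ev (\<lambda>y. \<tau> x (\<tau> y u) - \<tau> y (\<tau> x u)) b q =
      R (x + b) (wt b q) u - sc (of_int x) (R (x + b) q u) - R b (wt b q) u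
      + sc (poly q 1) (sc (of_int x) (\<tau> x u))" for x
  proof -
    have "ev (\<lambda>y. \<tau> x (\<tau> y u) - \<tau> y (\<tau> x u)) b q =
      ev (\<lambda>y. sc (of_int y) (\<tau> (x + y) u) - sc (of_int x) (\<tau> (x + y) u)
         - sc (of_int y) (\<tau> y u) + sc (of_int x) (\<tau> x u)) b q"
      by (rule ev_cong) (simp add: R1[OF u] scale_left_diff_distrib add.commute)
    also have "\<dots> = ev (\<lambda>y. sc (of_int y) (\<tau> (x + y) u)) b q - sc (of_int x) (ev (\<lambda>y. \<tau> (x + y) u) b q)
         - ev (\<lambda>y. sc (of_int y) (\<tau> y u)) b q + sc (poly q 1) (sc (of_int x) (\<tau> x u))"
      by (simp add: ev_addf ev_diff_f ev_scf ev_const_fun)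
    also have "ev (\<lambda>y. sc (of_int y) (\<tau> (x + y) u)) b q = R (x + b) (wt b q) u"
      unfolding ev_weight R_def wt_def by (rule ev_shift)
    also have "ev (\<lambda>y. \<tau> (x + y) u) b q = R (x + b) q u"
      unfolding R_def by (rule ev_shift)
    also have "ev (\<lambda>y. sc (of_int y) (\<tau> y u)) b q = R b (wt b q) u"
      unfolding ev_weight R_def wt_def ..
    finally show ?thesis .
  qed
  have "R a p (R b q u) - R b q (R a p u) =
     ev (\<lambda>x. ev (\<lambda>y. \<tau> x (\<tau> y u) - \<tau> y (\<tau> x u)) b q) a p"
    unfolding l1 l2 by (simp add: ev_diff_f)
  also have "\<dots> = ev (\<lambda>x. R (x + b) (wt b q) u) a p - ev (\<lambda>x. sc (of_int x) (R (x + b) q u)) a p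
      - sc (poly p 1) (R b (wt b q) u) + sc (poly q 1) (ev (\<lambda>x. sc (of_int x) (\<tau> x u)) a p)"
    unfolding inner by (simp only: ev_addf ev_diff_f ev_scf ev_const_fun)
  also have "ev (\<lambda>x. sc (of_int x) (R (x + b) q u)) a p = R (a + b) (q * wt a p) u"
    unfolding ev_weight wt_def by (rule R_shift_mult)
  also have "ev (\<lambda>x. sc (of_int x) (\<tau> x u)) a p = R a (wt a p) u"
    unfolding ev_weight R_def wt_def ..
  finally show ?thesis
    by (simp add: R_shift_mult R_diff)
qed

lemma R_add: "R c (P1 + P2) u = R c P1 u + R c P2 u"
  by (simp add: R_def ev_add)

lemma R_smult: "R c (smult d P) u = sc d (R c P u)"
  by (simp add: R_def ev_smult)

lemma R_sum: "R c (\<Sum>i\<in>I. P i) u = (\<Sum>i\<in>I. R c (P i) u)"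
proof (induction I rule: infinite_finite_induct)
  case (infinite A)
  then show ?case by (simp add: R_def)
next
  case empty
  then show ?case by (simp add: R_def)
next
  case (insert x F)
  then show ?case by (simp add: R_add)
qed

lemma R_mult: "R a (p * q) u = ev (\<lambda>b. R b p u) a q"
  by (simp add: R_def ev_mult)

definition Qs :: "complex poly set" where
  "Qs = {p. poly p 1 = 0 \<and> (\<forall>a. \<forall>u\<in>U. R a p u = 0)}"

lemma QsD: "p \<in> Qs \<Longrightarrow> u \<in> U \<Longrightarrow> R a p u = 0"
  by (simp add: Qs_def)

lemma Q_mult: "p \<in> Qs \<Longrightarrow> p * q \<in> Qs"
  by (simp add: Qs_def R_mult ev_def)

lemma Q_diff: "p \<in> Qs \<Longrightarrow> q \<in> Qs \<Longrightarrow> p - q \<in> Qs"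
  by (simp add: Qs_def R_diff)

lemma Q_divz: "pCons 0 p \<in> Qs \<Longrightarrow> p \<in> Qs"
  unfolding Qs_def
proof safe
  assume h: "poly (pCons 0 p) 1 = 0" "\<forall>a. \<forall>u\<in>U. R a (pCons 0 p) u = 0"
  then show "poly p 1 = 0" by simp
  fix a u assume "u \<in> U"
  then have "R (a - 1) (pCons 0 p) u = 0" using h by auto
  then show "R a p u = 0" by (simp add: R_def ev_pCons0)
qed

lemma R_Qs_zero: "p \<in> Qs \<Longrightarrow> u \<in> U \<Longrightarrow> R b q (R a p u) = 0"
  by (simp add: QsD lin_zero[OF R_lin])

lemma Q_der: assumes p: "p \<in> Qs" shows "[:-1,1:] * pCons 0 (pderiv p) \<in> Qs"
proof -
  define q0 :: "complex poly" where "q0 = [:-1,1:]"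
  have pp1: "poly p 1 = 0" using p by (simp add: Qs_def)
  have "R a (q0 * pCons 0 (pderiv p)) u = 0" if u: "u \<in> U" for a u
  proof -
    have br: "R a p (R 0 q0 u) - R 0 q0 (R a p u) =
      R (a + 0) (wt 0 q0 * p - q0 * wt a p) u - sc (poly p 1) (R 0 (wt 0 q0) u)
      + sc (poly q0 1) (R a (wt a p) u)"
      by (rule bracket[OF u])
    have lhs: "R a p (R 0 q0 u) - R 0 q0 (R a p u) = 0"
      using QsD[OF p R_U[OF u]] QsD[OF p u] lin_zero[OF R_lin] by simp
    have e: "wt 0 q0 * p - q0 * wt a p = p * wt 0 q0 - smult (of_int a) (p * q0) - q0 * pCons 0 (pderiv p)"
      by (simp add: wt_def algebra_simps)
    have pq0: "poly q0 1 = 0" by (simp add: q0_def)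
    have "0 = R a (wt 0 q0 * p - q0 * wt a p) u"
      using br unfolding lhs pp1 pq0 by simp
    also have "\<dots> = R a (p * wt 0 q0) u - sc (of_int a) (R a (p * q0) u) - R a (q0 * pCons 0 (pderiv p)) u"
      by (simp only: e R_diff R_smult)
    finally have "0 = R a (p * wt 0 q0) u - sc (of_int a) (R a (p * q0) u) - R a (q0 * pCons 0 (pderiv p)) u" .
    also have "R a (p * wt 0 q0) u = 0" using QsD[OF Q_mult[OF p] u] .
    also have "R a (p * q0) u = 0" using QsD[OF Q_mult[OF p] u] .
    finally show ?thesis by simp
  qed
  moreover have "poly (q0 * pCons 0 (pderiv p)) 1 = 0" by (simp add: q0_def)
  ultimately show ?thesis unfolding q0_def Qs_def by auto
qed

lemma dep_exists: "\<exists>f. f \<noteq> 0 \<and> poly f 1 = 0 \<and> (\<forall>u\<in>U. R 0 f u = 0)"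
proof -
  define M where "M = card Bs * card Bs + 1"
  define I where "I = {1..M}"
  define K where "K = Bs \<times> Bs"
  define x where "x i bb = representation Bs (\<tau> (int i) (fst bb) - \<tau> 0 (fst bb)) (snd bb)" for i bb
  have "card K < card I" by (simp add: K_def I_def M_def card_cartesian_product)
  then obtain c where c: "\<exists>i\<in>I. c i \<noteq> 0" "\<forall>k\<in>K. (\<Sum>i\<in>I. c i * x i k) = 0"
    using gauss_elim[of K I x] Bs_fin by (auto simp: K_def I_def)
  define f where "f = (\<Sum>i\<in>I. monom (c i) i - [:c i:])"
  have "poly f 1 = 0" by (simp add: f_def poly_sum poly_monom)
  moreover have "f \<noteq> 0"
  proof -
    obtain i0 where i0: "i0 \<in> I" "c i0 \<noteq> 0" using c(1) by auto
    have ci: "coeff (monom (c i) i - [:c i:]) i0 = (if i = i0 then c i else 0)" for i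
      using i0 by (cases i0) (auto simp: coeff_monom I_def)
    have "coeff f i0 = (\<Sum>i\<in>I. (if i = i0 then c i else 0))"
      by (simp only: f_def coeff_sum ci)
    also have "\<dots> = c i0" using i0 by (simp add: I_def)
    finally show ?thesis using i0 by auto
  qed
  moreover have "\<forall>u\<in>U. R 0 f u = 0"
  proof -
    define Y where "Y u = (\<Sum>i\<in>I. sc (c i) (\<tau> (int i) u - \<tau> 0 u))" for u
    have Rf: "R 0 f u = Y u" for u
      by (simp only: f_def R_sum R_diff) (simp add: Y_def R_def ev_monom ev_const scale_right_diff_distrib)
    have linY: "lin Y" unfolding Y_def
      by (intro lin_sumf lin_scale lin_sub \<tau>_lin)
    have inspan: "\<tau> (int i) b - \<tau> 0 b \<in> span Bs" if "b \<in> Bs" for i b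
      using that Bs_span span_base[of b Bs] \<tau>_U U_sub by (auto intro: subspace_diff)
    have Yb: "Y b = 0" if b: "b \<in> Bs" for b
    proof -
      have rep: "representation Bs (Y b) b' = 0" for b'
      proof (cases "b' \<in> Bs")
        case True
        have "representation Bs (Y b) b' = (\<Sum>i\<in>I. c i * x i (b, b'))"
          unfolding Y_def x_def using inspan[OF b] Bs_ind
          by (simp add: representation_sum span_scale representation_scale)
        also have "\<dots> = 0" using c(2) b True by (auto simp: K_def)
        finally show ?thesis .
      next
        case False
        then show ?thesis using representation_ne_zero by blast
      qed
      have "Y b \<in> span Bs" unfolding Y_def using inspan[OF b] by (intro span_sum span_scale) auto
      then have "Y b = (\<Sum>b' | representation Bs (Y b) b' \<noteq> 0. sc (representation Bs (Y b) b') b')"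
        using sum_nonzero_representation_eq[OF Bs_ind] by auto
      also have "\<dots> = 0" using rep by simp
      finally show ?thesis .
    qed
    show ?thesis
    proof
      fix u assume "u \<in> U"
      then obtain w where "u = (\<Sum>v\<in>Bs. sc (w v) v)"
        using span_finite[OF Bs_fin] Bs_span by auto
      then have "Y u = (\<Sum>v\<in>Bs. sc (w v) (Y v))" by (simp add: lin_sum[OF linY] linD[OF linY])
      also have "\<dots> = 0" using Yb by simp
      finally show "R 0 f u = 0" using Rf by simp
    qed
  qed
  ultimately show ?thesis by blast
qed

lemma Q_nonzero: "\<exists>p\<in>Qs. p \<noteq> 0"
proof -
  obtain f where f: "f \<noteq> 0" "poly f 1 = 0" "\<forall>u\<in>U. R 0 f u = 0" using dep_exists by blast
  have A: "R b (f * f) u = 0" if "b \<noteq> 0" "u \<in> U" for b u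
  proof -
    have br: "R 0 f (R b f u) - R b f (R 0 f u) =
      R (0 + b) (wt b f * f - f * wt 0 f) u - sc (poly f 1) (R b (wt b f) u)
      + sc (poly f 1) (R 0 (wt 0 f) u)"
      by (rule bracket[OF that(2)])
    have e: "wt b f * f - f * wt 0 f = smult (of_int b) (f * f)"
      by (simp add: wt_def algebra_simps)
    have "0 = sc (of_int b) (R b (f * f) u)"
      using br f R_U[OF that(2)] that(2) lin_zero[OF R_lin] by (simp add: e R_smult)
    then show ?thesis using that(1) by simp
  qed
  define g where "g = f * f"
  have g1: "poly g 1 = 0" using f by (simp add: g_def)
  have A': "R b g u = 0" if "b \<noteq> 0" "u \<in> U" for b u using A[OF that] by (simp add: g_def)
  have B: "R (1 + c) (g * g) u = 0" if "c \<noteq> 0" "c \<noteq> 1" "u \<in> U" for c u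
  proof -
    have br: "R 1 g (R c g u) - R c g (R 1 g u) =
      R (1 + c) (wt c g * g - g * wt 1 g) u - sc (poly g 1) (R c (wt c g) u)
      + sc (poly g 1) (R 1 (wt 1 g) u)"
      by (rule bracket[OF that(3)])
    have e: "wt c g * g - g * wt 1 g = smult (of_int c - 1) (g * g)"
      by (simp add: wt_def algebra_simps smult_diff_left)
    have "0 = sc (of_int c - 1) (R (1 + c) (g * g) u)"
      using br f A'[OF that(1) that(3)] A'[of 1 u] that lin_zero[OF R_lin] g1 by (simp add: e R_smult)
    moreover have "(of_int c - 1 :: complex) \<noteq> 0" using that(2) by simp
    ultimately show ?thesis by simp
  qed
  have C: "R (-1 + c) (g * g) u = 0" if "c \<noteq> 0" "c \<noteq> -1" "u \<in> U" for c u
  proof -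
    have br: "R (-1) g (R c g u) - R c g (R (-1) g u) =
      R (-1 + c) (wt c g * g - g * wt (-1) g) u - sc (poly g 1) (R c (wt c g) u)
      + sc (poly g 1) (R (-1) (wt (-1) g) u)"
      by (rule bracket[OF that(3)])
    have e: "wt c g * g - g * wt (-1) g = smult (of_int c + 1) (g * g)"
      by (simp add: wt_def algebra_simps smult_add_left)
    have "0 = sc (of_int c + 1) (R (-1 + c) (g * g) u)"
      using br f A'[OF that(1) that(3)] A'[of "-1" u] that lin_zero[OF R_lin] g1 by (simp add: e R_smult)
    moreover have "(of_int c + 1 :: complex) \<noteq> 0"
      using that(2) by (metis add.commute add_eq_0_iff of_int_1 of_int_eq_iff of_int_minus)
    ultimately show ?thesis by simp
  qed
  have "R t (g * g) u = 0" if "u \<in> U" for t u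
  proof (cases "t = 1 \<or> t = 2")
    case True
    then show ?thesis using C[of "t + 1" u] that by auto
  next
    case False
    then show ?thesis using B[of "t - 1" u] that by auto
  qed
  moreover have "poly (g * g) 1 = 0" using f by (simp add: g_def)
  moreover have "g * g \<noteq> 0" using f by (simp add: g_def)
  ultimately show ?thesis unfolding Qs_def by blast
qed

theorem core_main: "\<exists>N. \<forall>a. \<forall>u\<in>U. R a ([:-1,1:]^N) u = 0"
proof -
  have "\<exists>N. [:-1,1:]^N \<in> Qs"
    by (rule poly_ideal_lemma[OF Q_mult Q_diff Q_divz Q_der Q_nonzero])
  then show ?thesis by (auto simp: Qs_def)
qed

end

context vs begin

lemma eig_indep_gen:
  fixes L :: "'j \<Rightarrow> 'v \<Rightarrow> 'v" and g :: "'a \<Rightarrow> 'j \<Rightarrow> complex"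
  assumes lin: "\<And>j. lin (L j)" and fin: "finite A"
    and eig: "\<And>a j. a \<in> A \<Longrightarrow> L j (y a) = sc (g a j) (y a)"
    and inj: "inj_on g A" and sum0: "(\<Sum>a\<in>A. y a) = 0"
  shows "\<forall>a\<in>A. y a = 0"
  using fin eig inj sum0
proof (induction A arbitrary: y rule: finite_induct)
  case empty
  then show ?case by simp
next
  case (insert a0 A)
  have zA: "\<forall>a\<in>A. y a = 0"
  proof
    fix a assume aA: "a \<in> A"
    have "sc (g a j - g a0 j) (y a) = 0" for j
    proof -
      define y' where "y' a = sc (g a j - g a0 j) (y a)" for a
      have e': "L j' (y' a) = sc (g a j') (y' a)" if "a \<in> A" for a j'
        using insert.prems(1)[of a j'] that
        by (simp add: y'_def linD[OF lin] scale_left_commute)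
      have "L j (\<Sum>a\<in>insert a0 A. y a) - sc (g a0 j) (\<Sum>a\<in>insert a0 A. y a) = 0"
        using insert.prems(3) lin_zero[OF lin] by simp
      then have "(\<Sum>a\<in>insert a0 A. L j (y a) - sc (g a0 j) (y a)) = 0"
        by (simp add: lin_sum[OF lin] scale_sum_right sum_subtractf)
      then have "(\<Sum>a\<in>A. y' a) = 0"
        using insert.hyps insert.prems(1)
        by (simp add: y'_def scale_left_diff_distrib)
      moreover have "inj_on g A" using insert.prems(2) by (auto simp: inj_on_def)
      ultimately have "\<forall>a\<in>A. y' a = 0"
        using insert.IH[of y'] e' insert.hyps by blast
      then show ?thesis using aA by (simp add: y'_def)
    qed
    moreover have "g a \<noteq> g a0" using insert.prems(2) insert.hyps aA by (auto simp: inj_on_def)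
    then obtain j where "g a j \<noteq> g a0 j" by auto
    ultimately show "y a = 0" by auto
  qed
  then have "y a0 = 0" using insert.prems(3) insert.hyps by simp
  with zA show ?case by simp
qed

lemma lin_image_span:
  assumes "lin f" "\<And>x. x \<in> G \<Longrightarrow> f x \<in> span G'" "x \<in> span G"
  shows "f x \<in> span G'"
  using assms(3)
proof (induction rule: span_induct_alt)
  case base
  then show ?case using lin_zero[OF assms(1)] span_zero by simp
next
  case (step c x y)
  then show ?case using assms(1,2) by (simp add: linD span_add span_scale)
qed

end

definition ofv :: "int^'n \<Rightarrow> complex^'n" where
  "ofv m = (\<chi> j. of_int (m $ j))"

lemma ofv_add: "ofv (m + k) = ofv m + ofv k"
  by (simp add: ofv_def vec_eq_iff)

lemma ofv_0[simp]: "ofv 0 = 0"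
  by (simp add: ofv_def vec_eq_iff)

lemma ofv_minus: "ofv (- m) = - ofv m"
  by (simp add: ofv_def vec_eq_iff)

lemma ofv_inj: "ofv m = ofv k \<longleftrightarrow> m = k"
  by (simp add: ofv_def vec_eq_iff)

lemma ofv_nth[simp]: "ofv m $ j = of_int (m $ j)"
  by (simp add: ofv_def)

locale catJ = vs sc for sc :: "complex \<Rightarrow> 'v::ab_group_add \<Rightarrow> 'v" +
  fixes E :: "int^'n \<Rightarrow> 'v \<Rightarrow> 'v" and D :: "'n \<Rightarrow> int^'n \<Rightarrow> 'v \<Rightarrow> 'v"
  assumes cJ: "cat_J sc E D"
begin

lemma E_lin: "lin (E m)" using cJ by (simp add: cat_J_def lin_iff)
lemma D_lin: "lin (D j s)" using cJ by (simp add: cat_J_def lin_iff)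
lemma E0[simp]: "E 0 w = w" using cJ by (simp add: cat_J_def)
lemma EE: "E m (E k w) = E (m + k) w" using cJ by (simp add: cat_J_def)
lemma Dcomm: "D j s (D k m w) - D k m (D j s w) =
        sc (of_int (m $ j)) (D k (s + m) w) - sc (of_int (s $ k)) (D j (s + m) w)"
  using cJ by (simp add: cat_J_def)
lemma J3: "D j s (E m w) = sc (of_int (m $ j)) (E (m + s) w) + E m (D j s w)"
  using cJ by (simp add: cat_J_def)
lemma J1: "span {w. \<exists>c. D j 0 w = sc c w} = UNIV"
  using cJ by (simp add: cat_J_def)
lemma J2: "\<exists>V. finite V \<and> F_basis sc E V"
  using cJ by (simp add: cat_J_def)

lemma E_inv1: "E (- m) (E m w) = w" by (simp add: EE)
lemma E_inv2: "E m (E (- m) w) = w" by (simp add: EE)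
lemma E_inj: "E m x = E m y \<longleftrightarrow> x = y" by (metis E_inv1)

abbreviation W :: "complex^'n \<Rightarrow> 'v set" where
  "W \<mu> \<equiv> weight_space sc D \<mu>"

lemma W_iff: "w \<in> W \<mu> \<longleftrightarrow> (\<forall>j. D j 0 w = sc (\<mu> $ j) w)"
  by (simp add: weight_space_def)

lemma W_sub: "subspace (W \<mu>)"
  unfolding subspace_def weight_space_def
  by (auto simp: lin_zero[OF D_lin] linD[OF D_lin] scale_right_distrib scale_left_commute mult.commute)

lemma zero_W[simp]: "0 \<in> W \<mu>" by (rule subspace_0[OF W_sub])

lemma E_W: "w \<in> W \<mu> \<Longrightarrow> E m w \<in> W (\<mu> + ofv m)"
  unfolding W_iff by (simp add: J3 linD[OF E_lin] scale_left_distrib add.commute)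

lemma D_W: assumes "w \<in> W \<mu>" shows "D k s w \<in> W (\<mu> + ofv s)"
  unfolding W_iff
proof
  fix j
  have "D j 0 (D k s w) - D k s (D j 0 w) = sc (of_int (s $ j)) (D k s w)"
    using Dcomm[of j 0 k s w] by simp
  then show "D j 0 (D k s w) = sc ((\<mu> + ofv s) $ j) (D k s w)"
    using assms unfolding W_iff by (simp add: linD[OF D_lin] scale_left_distrib algebra_simps)
qed

lemma D0_comm: "D i 0 (D j 0 w) = D j 0 (D i 0 w)"
  using Dcomm[of i 0 j 0 w] by simp

lemma W_indep:
  assumes "finite A" "\<And>a. a \<in> A \<Longrightarrow> y a \<in> W (\<mu> a)" "inj_on \<mu> A" "(\<Sum>a\<in>A. y a) = 0"
  shows "\<forall>a\<in>A. y a = 0"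
proof (rule eig_indep_gen[of "\<lambda>j. D j 0" A y "\<lambda>a j. \<mu> a $ j"])
  show "inj_on (\<lambda>a j. \<mu> a $ j) A" using assms(3) by (auto simp: inj_on_def vec_eq_iff fun_eq_iff)
qed (use assms D_lin W_iff in auto)

lemma W_span_sum:
  assumes "x \<in> span (\<Union>\<mu>\<in>M. W \<mu>)"
  shows "\<exists>F y. finite F \<and> F \<subseteq> M \<and> (\<forall>\<mu>\<in>F. y \<mu> \<in> W \<mu>) \<and> x = (\<Sum>\<mu>\<in>F. y \<mu>)"
  using assms
proof (induction rule: span_induct_alt)
  case base
  then show ?case by (intro exI[of _ "{}"]) auto
next
  case (step c x z)
  then obtain F y where F: "finite F" "F \<subseteq> M" "\<forall>\<mu>\<in>F. y \<mu> \<in> W \<mu>" "z = (\<Sum>\<mu>\<in>F. y \<mu>)" by blast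
  from step obtain \<mu>0 where m0: "\<mu>0 \<in> M" "x \<in> W \<mu>0" by auto
  define y' where "y' \<mu> = (if \<mu> = \<mu>0 then sc c x + (if \<mu>0 \<in> F then y \<mu>0 else 0) else y \<mu>)" for \<mu>
  have "(\<Sum>\<mu>\<in>insert \<mu>0 F. y' \<mu>) = sc c x + z"
  proof (cases "\<mu>0 \<in> F")
    case True
    then have "(\<Sum>\<mu>\<in>insert \<mu>0 F. y' \<mu>) = y' \<mu>0 + (\<Sum>\<mu>\<in>F - {\<mu>0}. y' \<mu>)"
      using F(1) by (simp add: insert_absorb sum.remove)
    also have "(\<Sum>\<mu>\<in>F - {\<mu>0}. y' \<mu>) = (\<Sum>\<mu>\<in>F - {\<mu>0}. y \<mu>)" by (rule sum.cong) (auto simp: y'_def)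
    finally show ?thesis using True F by (simp add: y'_def sum.remove add.assoc)
  next
    case False
    have "(\<Sum>\<mu>\<in>F. y' \<mu>) = (\<Sum>\<mu>\<in>F. y \<mu>)" by (rule sum.cong) (use False in \<open>auto simp: y'_def\<close>)
    then show ?thesis using False F by (simp add: y'_def)
  qed
  moreover have "\<forall>\<mu>\<in>insert \<mu>0 F. y' \<mu> \<in> W \<mu>"
    using F(3) m0 by (auto simp: y'_def intro: subspace_add[OF W_sub] subspace_scale[OF W_sub])
  ultimately show ?case using F m0 by (intro exI[of _ "insert \<mu>0 F"] exI[of _ y']) auto
qed

lemma W_component:
  assumes x: "x \<in> W \<mu>" and F: "finite F" and y: "\<And>\<nu>. \<nu> \<in> F \<Longrightarrow> y \<nu> \<in> W \<nu>"
    and xs: "x = (\<Sum>\<nu>\<in>F. y \<nu>)"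
  shows "x = (if \<mu> \<in> F then y \<mu> else 0)"
proof -
  define z where "z \<nu> = (if \<nu> = \<mu> then (if \<mu> \<in> F then y \<mu> else 0) - x else y \<nu>)" for \<nu>
  have "(\<Sum>\<nu>\<in>insert \<mu> F. z \<nu>) = 0"
  proof (cases "\<mu> \<in> F")
    case True
    then have "(\<Sum>\<nu>\<in>insert \<mu> F. z \<nu>) = z \<mu> + (\<Sum>\<nu>\<in>F - {\<mu>}. z \<nu>)"
      using F by (simp add: insert_absorb sum.remove)
    also have "(\<Sum>\<nu>\<in>F - {\<mu>}. z \<nu>) = (\<Sum>\<nu>\<in>F - {\<mu>}. y \<nu>)" by (rule sum.cong) (auto simp: z_def)
    finally show ?thesis using True F xs by (simp add: z_def sum.remove)
  next
    case False
    have "(\<Sum>\<nu>\<in>F. z \<nu>) = (\<Sum>\<nu>\<in>F. y \<nu>)" by (rule sum.cong) (use False in \<open>auto simp: z_def\<close>)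
    then show ?thesis using False F xs by (simp add: z_def)
  qed
  moreover have "\<And>\<nu>. \<nu> \<in> insert \<mu> F \<Longrightarrow> z \<nu> \<in> W \<nu>"
    using x y by (auto simp: z_def intro: subspace_diff[OF W_sub] subspace_neg[OF W_sub])
  ultimately have "\<forall>\<nu>\<in>insert \<mu> F. z \<nu> = 0"
    using W_indep[of "insert \<mu> F" z "\<lambda>\<nu>. \<nu>"] F by auto
  then show ?thesis by (auto simp: z_def)
qed

lemma EV_step:
  assumes v: "\<forall>j\<in>S. \<exists>c. D j 0 v = sc c v"
  shows "v \<in> span {w. \<forall>j\<in>insert i S. \<exists>c. D j 0 w = sc c w}"
proof -
  let ?Ei = "{w. \<exists>c. D i 0 w = sc c w}"
  have "v \<in> span ?Ei" using J1[of i] by auto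
  then obtain t r where t: "finite t" "t \<subseteq> ?Ei" "v = (\<Sum>x\<in>t. sc (r x) x)"
    unfolding span_explicit by auto
  define eo where "eo x = (SOME c. D i 0 x = sc c x)" for x
  have eo: "D i 0 x = sc (eo x) x" if "x \<in> t" for x
    unfolding eo_def using t(2) that by (auto intro: someI)
  define y where "y l = (\<Sum>x\<in>{x\<in>t. eo x = l}. sc (r x) x)" for l
  have vsum: "v = (\<Sum>l\<in>eo ` t. y l)"
    unfolding y_def t(3) by (rule sum.image_gen[OF t(1)])
  have yeig: "D i 0 (y l) = sc l (y l)" for l
    unfolding y_def using eo
    by (simp add: lin_sum[OF D_lin] linD[OF D_lin] scale_sum_right scale_left_commute mult.commute)
  have "y l \<in> {w. \<forall>j\<in>insert i S. \<exists>c. D j 0 w = sc c w}" if l: "l \<in> eo ` t" for l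
  proof (safe)
    show "\<exists>c. D i 0 (y l) = sc c (y l)" using yeig by blast
  next
    fix j assume j: "j \<in> S"
    obtain cj where cj: "D j 0 v = sc cj v" using v j by blast
    define z where "z l = D j 0 (y l) - sc cj (y l)" for l
    have "(\<Sum>l\<in>eo ` t. z l) = D j 0 v - sc cj v"
      unfolding z_def vsum by (simp add: sum_subtractf lin_sum[OF D_lin] scale_sum_right)
    then have zs: "(\<Sum>l\<in>eo ` t. z l) = 0" using cj by simp
    have zeig: "D i 0 (z l) = sc l (z l)" for l
      unfolding z_def using yeig
      by (simp add: lin_diff[OF D_lin] linD[OF D_lin] D0_comm[of i j] scale_right_diff_distrib scale_left_commute)
    have "\<forall>l\<in>eo ` t. z l = 0"
      by (rule eig_indep_gen[of "\<lambda>_::unit. D i 0" "eo ` t" z "\<lambda>l _. l"])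
         (use t(1) zs zeig D_lin in \<open>auto simp: inj_on_def fun_eq_iff\<close>)
    then have "z l = 0" using l by auto
    then show "\<exists>c. D j 0 (y l) = sc c (y l)" unfolding z_def by auto
  qed
  then show ?thesis unfolding vsum by (intro span_sum span_base) auto
qed

lemma EV_span: "finite S \<Longrightarrow> span {w. \<forall>j\<in>S. \<exists>c. D j 0 w = sc c w} = UNIV"
proof (induction S rule: finite_induct)
  case empty
  then show ?case by simp
next
  case (insert i S)
  have "UNIV = span {w. \<forall>j\<in>S. \<exists>c. D j 0 w = sc c w}" using insert.IH by simp
  also have "\<dots> \<subseteq> span {w. \<forall>j\<in>insert i S. \<exists>c. D j 0 w = sc c w}"
    by (rule span_minimal) (use EV_step in auto)
  finally show ?case by auto
qed

lemma W_span_all: "span (\<Union>\<mu>\<in>UNIV. W \<mu>) = UNIV"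
proof -
  have "{w. \<forall>j\<in>UNIV. \<exists>c. D j 0 w = sc c w} \<subseteq> (\<Union>\<mu>\<in>UNIV. W \<mu>)"
  proof
    fix w assume "w \<in> {w. \<forall>j\<in>UNIV. \<exists>c. D j 0 w = sc c w}"
    then have "\<forall>j. D j 0 w = sc (SOME c. D j 0 w = sc c w) w" by (auto intro: someI)
    then have "w \<in> W (\<chi> j. SOME c. D j 0 w = sc c w)" by (simp add: W_iff)
    then show "w \<in> (\<Union>\<mu>\<in>UNIV. W \<mu>)" by blast
  qed
  then have "span {w. \<forall>j\<in>UNIV. \<exists>c. D j 0 w = sc c w} \<subseteq> span (\<Union>\<mu>\<in>UNIV. W \<mu>)"
    by (rule span_mono)
  then show ?thesis using EV_span[of UNIV] by auto
qed

lemma W_decomp: "\<exists>F y. finite F \<and> (\<forall>\<mu>\<in>F. y \<mu> \<in> W \<mu>) \<and> x = (\<Sum>\<mu>\<in>F. y \<mu>)"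
proof -
  have "x \<in> span (\<Union>\<mu>\<in>UNIV. W \<mu>)" using W_span_all by simp
  from W_span_sum[OF this] obtain F y where "finite F" "\<forall>\<mu>\<in>F. y \<mu> \<in> W \<mu>" "x = (\<Sum>\<mu>\<in>F. y \<mu>)"
    by blast
  then show ?thesis by blast
qed

lemma span_W_closed:
  assumes "lin f" "\<And>\<mu> w. \<mu> \<in> M \<Longrightarrow> w \<in> W \<mu> \<Longrightarrow> f w \<in> W (\<mu> + d)" "\<And>\<mu>. \<mu> \<in> M \<Longrightarrow> \<mu> + d \<in> M"
  shows "f ` span (\<Union>\<mu>\<in>M. W \<mu>) \<subseteq> span (\<Union>\<mu>\<in>M. W \<mu>)"
proof
  fix x assume "x \<in> f ` span (\<Union>\<mu>\<in>M. W \<mu>)"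
  then obtain z where z: "z \<in> span (\<Union>\<mu>\<in>M. W \<mu>)" "x = f z" by auto
  have "f z \<in> span (\<Union>\<mu>\<in>M. W \<mu>)"
  proof (rule lin_image_span[OF assms(1) _ z(1)])
    fix w assume "w \<in> (\<Union>\<mu>\<in>M. W \<mu>)"
    then obtain \<mu> where "\<mu> \<in> M" "w \<in> W \<mu>" by blast
    then have "f w \<in> W (\<mu> + d)" "\<mu> + d \<in> M" using assms(2,3) by auto
    then show "f w \<in> span (\<Union>\<mu>\<in>M. W \<mu>)" by (intro span_base) blast
  qed
  then show "x \<in> span (\<Union>\<mu>\<in>M. W \<mu>)" using z by simp
qed

lemma single_coset:
  assumes ind: "indecomposable sc E D"
  shows "\<exists>lam. W lam \<noteq> {0} \<and> (\<forall>\<mu>. W \<mu> \<noteq> {0} \<longrightarrow> (\<exists>m. \<mu> = lam + ofv m))"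
proof -
  have "(UNIV :: 'v set) \<noteq> {0}" using ind unfolding indecomposable_def by blast
  then obtain x :: 'v where "x \<noteq> 0" by blast
  obtain F y where F: "finite F" "\<forall>\<mu>\<in>F. y \<mu> \<in> W \<mu>" "x = (\<Sum>\<mu>\<in>F. y \<mu>)" using W_decomp by blast
  have "\<not> (\<forall>\<mu>\<in>F. y \<mu> = 0)"
  proof
    assume "\<forall>\<mu>\<in>F. y \<mu> = 0"
    then have "(\<Sum>\<mu>\<in>F. y \<mu>) = 0" by (intro sum.neutral) auto
    then show False using \<open>x \<noteq> 0\<close> F(3) by simp
  qed
  then obtain lam where lam: "lam \<in> F" "y lam \<noteq> 0" by auto
  have Wlam: "W lam \<noteq> {0}" using lam F(2) by auto
  define C where "C = {\<mu>. \<exists>m. \<mu> = lam + ofv m}"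
  define S where "S = span (\<Union>\<mu>\<in>C. W \<mu>)"
  define T where "T = span (\<Union>\<mu>\<in>-C. W \<mu>)"
  have Cadd: "\<mu> + ofv m \<in> C \<longleftrightarrow> \<mu> \<in> C" for \<mu> m
  proof
    assume "\<mu> + ofv m \<in> C"
    then obtain k where k: "\<mu> + ofv m = lam + ofv k" by (auto simp: C_def)
    have "\<mu> = lam + ofv k - ofv m" using k by (simp add: eq_diff_eq)
    also have "\<dots> = lam + ofv (k + - m)" by (simp add: ofv_def vec_eq_iff)
    finally have "\<mu> = lam + ofv (k + - m)" .
    then show "\<mu> \<in> C" by (auto simp: C_def)
  next
    assume "\<mu> \<in> C"
    then obtain k where k: "\<mu> = lam + ofv k" by (auto simp: C_def)
    then have "\<mu> + ofv m = lam + ofv (k + m)" by (simp add: ofv_add algebra_simps)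
    then show "\<mu> + ofv m \<in> C" by (auto simp: C_def)
  qed
  have subm: "submod sc E D (span (\<Union>\<mu>\<in>M. W \<mu>))" if "\<And>\<mu> m. \<mu> + ofv m \<in> M \<longleftrightarrow> \<mu> \<in> M" for M
    unfolding submod_def
  proof (intro conjI allI)
    show "subspace (span (\<Union>\<mu>\<in>M. W \<mu>))" by simp
    show "E m ` span (\<Union>\<mu>\<in>M. W \<mu>) \<subseteq> span (\<Union>\<mu>\<in>M. W \<mu>)" for m
      by (rule span_W_closed[OF E_lin]) (use that E_W in auto)
    show "D j s ` span (\<Union>\<mu>\<in>M. W \<mu>) \<subseteq> span (\<Union>\<mu>\<in>M. W \<mu>)" for j s
      by (rule span_W_closed[OF D_lin]) (use that D_W in auto)
  qed
  have subS: "submod sc E D S" unfolding S_def by (rule subm) (use Cadd in auto)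
  have subT: "submod sc E D T" unfolding T_def by (rule subm) (use Cadd in auto)
  have S0: "S \<noteq> {0}"
  proof -
    obtain w where "w \<in> W lam" "w \<noteq> 0" using Wlam zero_W by blast
    moreover have "lam \<in> C" unfolding C_def by (rule CollectI, rule exI[of _ 0], simp)
    ultimately have "w \<in> S" unfolding S_def by (auto intro: span_base)
    then show ?thesis using \<open>w \<noteq> 0\<close> by auto
  qed
  have ST: "S \<inter> T = {0}"
  proof safe
    fix z assume zS: "z \<in> S" and zT: "z \<in> T"
    obtain F1 y1 where F1: "finite F1" "F1 \<subseteq> C" "\<forall>\<mu>\<in>F1. y1 \<mu> \<in> W \<mu>" "z = (\<Sum>\<mu>\<in>F1. y1 \<mu>)"
      using W_span_sum[of z C] zS unfolding S_def by blast
    obtain F2 y2 where F2: "finite F2" "F2 \<subseteq> -C" "\<forall>\<mu>\<in>F2. y2 \<mu> \<in> W \<mu>" "z = (\<Sum>\<mu>\<in>F2. y2 \<mu>)"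
      using W_span_sum[of z "-C"] zT unfolding T_def by blast
    have z1: "z = (if \<mu> \<in> F1 then y1 \<mu> else 0)" if "z \<in> W \<mu>" for \<mu>
      by (rule W_component[OF that F1(1) _ F1(4)]) (use F1(3) in auto)
    define yy where "yy \<mu> = (if \<mu> \<in> F1 then y1 \<mu> else - y2 \<mu>)" for \<mu>
    have disj: "F1 \<inter> F2 = {}" using F1(2) F2(2) by auto
    have "(\<Sum>\<mu>\<in>F1 \<union> F2. yy \<mu>) = (\<Sum>\<mu>\<in>F1. yy \<mu>) + (\<Sum>\<mu>\<in>F2. yy \<mu>)"
      by (rule sum.union_disjoint) (use F1 F2 disj in auto)
    also have "(\<Sum>\<mu>\<in>F1. yy \<mu>) = z" unfolding F1(4) by (rule sum.cong) (auto simp: yy_def)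
    also have "(\<Sum>\<mu>\<in>F2. yy \<mu>) = - z" unfolding F2(4) using disj
      by (auto simp: yy_def sum_negf[symmetric] intro!: sum.cong)
    finally have s0: "(\<Sum>\<mu>\<in>F1 \<union> F2. yy \<mu>) = 0" by simp
    have mem: "\<And>\<mu>. \<mu> \<in> F1 \<union> F2 \<Longrightarrow> yy \<mu> \<in> W \<mu>"
      using F1(3) F2(3) by (auto simp: yy_def intro: subspace_neg[OF W_sub])
    have "\<forall>\<mu>\<in>F1 \<union> F2. yy \<mu> = 0"
      using W_indep[of "F1 \<union> F2" yy "\<lambda>\<mu>. \<mu>", OF _ mem] F1(1) F2(1) s0 by auto
    then have "\<forall>\<mu>\<in>F1. y1 \<mu> = 0" unfolding yy_def by (metis UnCI)
    then show "z = 0" using F1(4) by simp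
  qed (auto simp: S_def T_def intro: span_zero)
  have STU: "{x + y | x y. x \<in> S \<and> y \<in> T} = UNIV"
  proof safe
    fix z :: 'v
    obtain F y where F: "finite F" "\<forall>\<mu>\<in>F. y \<mu> \<in> W \<mu>" "z = (\<Sum>\<mu>\<in>F. y \<mu>)" using W_decomp by blast
    have "z = (\<Sum>\<mu>\<in>F \<inter> C. y \<mu>) + (\<Sum>\<mu>\<in>F - C. y \<mu>)"
      using F by (simp add: sum.Int_Diff)
    moreover have "(\<Sum>\<mu>\<in>F \<inter> C. y \<mu>) \<in> S" unfolding S_def
      using F(2) by (intro span_sum span_base) auto
    moreover have "(\<Sum>\<mu>\<in>F - C. y \<mu>) \<in> T" unfolding T_def
      using F(2) by (intro span_sum span_base) auto
    ultimately show "\<exists>x y. z = x + y \<and> x \<in> S \<and> y \<in> T" by blast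
  qed simp
  have "\<forall>\<mu>. W \<mu> \<noteq> {0} \<longrightarrow> \<mu> \<in> C"
  proof (rule ccontr)
    assume "\<not> (\<forall>\<mu>. W \<mu> \<noteq> {0} \<longrightarrow> \<mu> \<in> C)"
    then obtain \<mu> where mu: "W \<mu> \<noteq> {0}" "\<mu> \<notin> C" by auto
    obtain w where "w \<in> W \<mu>" "w \<noteq> 0" using mu zero_W by blast
    then have "w \<in> T" unfolding T_def using mu by (auto intro: span_base)
    then have "T \<noteq> {0}" using \<open>w \<noteq> 0\<close> by auto
    then show False using ind subS subT S0 ST STU unfolding indecomposable_def by blast
  qed
  then show ?thesis using Wlam unfolding C_def by blast
qed

end

context catJ begin

lemma W_unique: "x \<in> W \<mu> \<Longrightarrow> x \<in> W \<nu> \<Longrightarrow> x \<noteq> 0 \<Longrightarrow> \<mu> = \<nu>"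
  unfolding W_iff by (auto simp: vec_eq_iff)

definition pr :: "complex^'n \<Rightarrow> 'v \<Rightarrow> 'v" where
  "pr \<mu> x = (SOME w. w \<in> W \<mu> \<and> x - w \<in> span (\<Union>\<nu>\<in>-{\<mu>}. W \<nu>))"

lemma pr_ex: "\<exists>w. w \<in> W \<mu> \<and> x - w \<in> span (\<Union>\<nu>\<in>-{\<mu>}. W \<nu>)"
proof -
  obtain F y where F: "finite F" "\<forall>\<nu>\<in>F. y \<nu> \<in> W \<nu>" "x = (\<Sum>\<nu>\<in>F. y \<nu>)" using W_decomp by blast
  define w where "w = (if \<mu> \<in> F then y \<mu> else 0)"
  have "x - w = (\<Sum>\<nu>\<in>F - {\<mu>}. y \<nu>)"
    using F by (simp add: w_def sum_diff1)
  also have "\<dots> \<in> span (\<Union>\<nu>\<in>-{\<mu>}. W \<nu>)"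
    using F(2) by (intro span_sum span_base) auto
  finally show ?thesis using F(2) by (intro exI[of _ w]) (auto simp: w_def)
qed

lemma pr_char:
  assumes "w \<in> W \<mu>" "x - w \<in> span (\<Union>\<nu>\<in>-{\<mu>}. W \<nu>)"
  shows "pr \<mu> x = w"
proof -
  define w' where "w' = pr \<mu> x"
  have w': "w' \<in> W \<mu>" "x - w' \<in> span (\<Union>\<nu>\<in>-{\<mu>}. W \<nu>)"
    unfolding w'_def pr_def using someI_ex[OF pr_ex[of \<mu> x]] by auto
  have d1: "w' - w \<in> W \<mu>" using w' assms by (intro subspace_diff[OF W_sub])
  have "w' - w = (x - w) - (x - w')" by simp
  also have "\<dots> \<in> span (\<Union>\<nu>\<in>-{\<mu>}. W \<nu>)" by (rule span_diff[OF assms(2) w'(2)])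
  finally have "w' - w \<in> span (\<Union>\<nu>\<in>-{\<mu>}. W \<nu>)" .
  from W_span_sum[OF this] obtain F y where F: "finite F" "F \<subseteq> -{\<mu>}" "\<forall>\<nu>\<in>F. y \<nu> \<in> W \<nu>" "w' - w = (\<Sum>\<nu>\<in>F. y \<nu>)"
    by blast
  have "w' - w = (if \<mu> \<in> F then y \<mu> else 0)"
    by (rule W_component[OF d1 F(1) _ F(4)]) (use F(3) in auto)
  moreover have "\<mu> \<notin> F" using F(2) by blast
  ultimately have "w' = w" by simp
  then show ?thesis by (simp add: w'_def)
qed

lemma pr_lin: "lin (pr \<mu>)"
  unfolding lin_def
proof (intro conjI allI)
  fix x y
  have a: "pr \<mu> x \<in> W \<mu> \<and> x - pr \<mu> x \<in> span (\<Union>\<nu>\<in>-{\<mu>}. W \<nu>)" for x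
    unfolding pr_def using someI_ex[OF pr_ex[of \<mu> x]] by auto
  show "pr \<mu> (x + y) = pr \<mu> x + pr \<mu> y"
  proof (rule pr_char)
    show "pr \<mu> x + pr \<mu> y \<in> W \<mu>" using a by (intro subspace_add[OF W_sub]) auto
    have e: "x + y - (pr \<mu> x + pr \<mu> y) = (x - pr \<mu> x) + (y - pr \<mu> y)" by simp
    show "x + y - (pr \<mu> x + pr \<mu> y) \<in> span (\<Union>\<nu>\<in>-{\<mu>}. W \<nu>)"
      unfolding e by (rule span_add) (use a in auto)
  qed
  fix c
  show "pr \<mu> (sc c x) = sc c (pr \<mu> x)"
  proof (rule pr_char)
    show "sc c (pr \<mu> x) \<in> W \<mu>" using a by (intro subspace_scale[OF W_sub]) auto
    have e: "sc c x - sc c (pr \<mu> x) = sc c (x - pr \<mu> x)" by (simp add: scale_right_diff_distrib)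
    show "sc c x - sc c (pr \<mu> x) \<in> span (\<Union>\<nu>\<in>-{\<mu>}. W \<nu>)"
      unfolding e by (rule span_scale) (use a in auto)
  qed
qed

lemma pr_same: "w \<in> W \<mu> \<Longrightarrow> pr \<mu> w = w"
  by (rule pr_char) (auto simp: span_zero)

lemma pr_other: "w \<in> W \<nu> \<Longrightarrow> \<nu> \<noteq> \<mu> \<Longrightarrow> pr \<mu> w = 0"
  by (rule pr_char) (auto intro: span_base)

end

locale catJ1 = catJ sc E D for sc :: "complex \<Rightarrow> 'v::ab_group_add \<Rightarrow> 'v"
  and E :: "int^'n \<Rightarrow> 'v \<Rightarrow> 'v" and D :: "'n \<Rightarrow> int^'n \<Rightarrow> 'v \<Rightarrow> 'v" +
  fixes lam :: "complex^'n"
  assumes lam_nz: "W lam \<noteq> {0}"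
    and coset: "\<And>\<mu>. W \<mu> \<noteq> {0} \<Longrightarrow> \<exists>m. \<mu> = lam + ofv m"
begin

abbreviation U where "U \<equiv> W lam"

lemma U_sub: "subspace U" by (rule W_sub)

lemma decomp_m: "\<exists>F z. finite F \<and> (\<forall>m\<in>F. z m \<in> W (lam + ofv m)) \<and> x = (\<Sum>m\<in>F. z m)"
proof -
  obtain F y where F: "finite F" "\<forall>\<nu>\<in>F. y \<nu> \<in> W \<nu>" "x = (\<Sum>\<nu>\<in>F. y \<nu>)" using W_decomp by blast
  define F' where "F' = {\<nu>\<in>F. y \<nu> \<noteq> 0}"
  have x': "x = (\<Sum>\<nu>\<in>F'. y \<nu>)"
    unfolding F(3) F'_def by (rule sum.mono_neutral_right) (use F(1) in auto)
  define h where "h m = lam + ofv m" for m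
  have injh: "inj h" by (auto simp: inj_def h_def ofv_inj)
  define G where "G = h -` F'"
  have finG: "finite G" unfolding G_def using F(1) injh by (intro finite_vimageI) (auto simp: F'_def)
  have hG: "h ` G = F'"
  proof -
    have "\<nu> \<in> range h" if "\<nu> \<in> F'" for \<nu>
    proof -
      have "y \<nu> \<in> W \<nu>" "y \<nu> \<noteq> 0" using that F(2) by (auto simp: F'_def)
      then have "W \<nu> \<noteq> {0}" by (metis singletonD)
      then obtain m where "\<nu> = lam + ofv m" using coset by blast
      then show ?thesis by (auto simp: h_def)
    qed
    then show ?thesis by (auto simp: G_def)
  qed
  have inj2: "inj_on h G" using injh by (simp add: inj_on_def inj_def)
  have "x = (\<Sum>\<nu>\<in>h ` G. y \<nu>)" using x' hG by simp
  also have "\<dots> = (\<Sum>m\<in>G. y (h m))" using sum.reindex[OF inj2, of y] by simp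
  finally have xs: "x = (\<Sum>m\<in>G. y (h m))" .
  have ws: "\<forall>m\<in>G. y (h m) \<in> W (lam + ofv m)"
  proof
    fix m assume "m \<in> G"
    then have "h m \<in> F" by (simp add: G_def F'_def)
    then have "y (h m) \<in> W (h m)" using F(2) by blast
    then show "y (h m) \<in> W (lam + ofv m)" by (simp add: h_def)
  qed
  show ?thesis by (rule exI[of _ G], rule exI[of _ "\<lambda>m. y (h m)"]) (use finG xs ws in blast)
qed

lemma W_shift: "w \<in> W (lam + ofv m) \<Longrightarrow> E (- m) w \<in> U"
  using E_W[of w "lam + ofv m" "- m"] by (simp add: ofv_minus)

lemma U_shift: "u \<in> U \<Longrightarrow> E m u \<in> W (lam + ofv m)"
  using E_W by simp

lemma U_fin: "\<exists>B. finite B \<and> B \<subseteq> U \<and> independent B \<and> span B = U"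
proof -
  obtain V where V: "finite V" "F_basis sc E V" using J2 by blast
  have spanV: "span ((\<lambda>(m, v). E m v) ` (UNIV \<times> V)) = UNIV"
    using V(2) by (simp add: F_basis_def)
  define P where "P v F z \<longleftrightarrow> finite F \<and> (\<forall>m\<in>F. z m \<in> W (lam + ofv m)) \<and> v = (\<Sum>m\<in>F. z m)"
    for v F and z :: "int^'n \<Rightarrow> 'v"
  have "\<forall>v. \<exists>Fz. P v (fst Fz) (snd Fz)" unfolding P_def using decomp_m by simp
  from choice[OF this] obtain fz where fz: "\<forall>v. P v (fst (fz v)) (snd (fz v))" by blast
  define Fv where "Fv v = fst (fz v)" for v
  define zv where "zv v = snd (fz v)" for v
  have FZ: "P v (Fv v) (zv v)" for v using fz by (simp add: Fv_def zv_def)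
  define G where "G = (\<lambda>(v, m). E (- m) (zv v m)) ` (SIGMA v:V. Fv v)"
  have finG: "finite G" unfolding G_def using V(1) FZ by (auto simp: P_def)
  have GU: "G \<subseteq> U" unfolding G_def using FZ by (auto simp: P_def intro: W_shift)
  have prE: "pr lam (E k v) \<in> span G" if v: "v \<in> V" for k v
  proof -
    define sv where "sv = (\<Sum>m\<in>Fv v. zv v m)"
    have "v = sv" using FZ[of v] by (simp add: P_def sv_def)
    then have "pr lam (E k v) = pr lam (E k sv)" by simp
    also have "\<dots> = (\<Sum>m\<in>Fv v. pr lam (E k (zv v m)))"
      by (simp add: sv_def lin_sum[OF E_lin] lin_sum[OF pr_lin])
    also have "\<dots> \<in> span G"
    proof (intro span_sum)
      fix m assume m: "m \<in> Fv v"
      have zW: "E k (zv v m) \<in> W (lam + ofv (m + k))"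
        using E_W[of "zv v m" "lam + ofv m" k] FZ[of v] m by (simp add: P_def ofv_add add.assoc)
      show "pr lam (E k (zv v m)) \<in> span G"
      proof (cases "m + k = 0")
        case True
        then have "k = - m" by (simp add: eq_neg_iff_add_eq_0 add.commute)
        then have "pr lam (E k (zv v m)) = E (- m) (zv v m)"
          using pr_same[of "E k (zv v m)" lam] zW True by simp
        also have "\<dots> \<in> G" unfolding G_def using v m by (intro image_eqI[of _ _ "(v, m)"]) auto
        finally show ?thesis by (rule span_base)
      next
        case False
        have "lam + ofv (m + k) \<noteq> lam"
        proof
          assume "lam + ofv (m + k) = lam"
          then have "ofv (m + k) = ofv 0" by simp
          then show False using False ofv_inj by blast
        qed
        then have "pr lam (E k (zv v m)) = 0" using pr_other[OF zW] by simp
        then show ?thesis by (simp add: span_zero)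
      qed
    qed
    finally show ?thesis .
  qed
  have UG: "U \<subseteq> span G"
  proof
    fix u assume u: "u \<in> U"
    have "u \<in> span ((\<lambda>(m, v). E m v) ` (UNIV \<times> V))" using spanV by simp
    then have "pr lam u \<in> span G"
      by (rule lin_image_span[OF pr_lin, rotated]) (use prE in auto)
    then show "u \<in> span G" using pr_same[OF u] by simp
  qed
  obtain B where B: "B \<subseteq> U" "independent B" "U \<subseteq> span B" "card B = dim U"
    using basis_exists by blast
  have "finite B" using independent_span_bound[OF finG B(2)] B(1) UG by auto
  moreover have "span B = U"
    using B span_minimal[OF B(1) U_sub] by auto
  ultimately show ?thesis using B by blast
qed

end

context catJ1 begin

lemma E_zero: "E m 0 = 0" by (rule lin_zero[OF E_lin])

lemma F_basis_B:
  assumes B: "finite B" "B \<subseteq> U" "independent B" "span B = U"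
  shows "F_basis sc E B"
  unfolding F_basis_def
proof (intro conjI)
  have B0: "0 \<notin> B" using B(3) dependent_zero by blast
  have Enz: "E m b \<noteq> 0" if "b \<in> B" for m b
    using B0 that E_inj[of m b 0] E_zero by auto
  have EW: "E m b \<in> W (lam + ofv m)" if "b \<in> B" for m b
    using U_shift B(2) that by auto
  show "inj_on (\<lambda>(m, v). E m v) (UNIV \<times> B)"
  proof (rule inj_onI, clarify)
    fix m b m' b' assume bb: "b \<in> B" "b' \<in> B" and eq: "E m b = E m' b'"
    have "lam + ofv m = lam + ofv m'"
      using W_unique[OF EW[OF bb(1)] _ Enz[OF bb(1)]] EW[OF bb(2), of m'] eq by simp
    then have "m = m'" by (simp add: ofv_inj)
    then show "m = m' \<and> b = b'" using eq E_inj by simp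
  qed
  show "span ((\<lambda>(m, v). E m v) ` (UNIV \<times> B)) = UNIV"
  proof (rule set_eqI, rule iffI)
    fix x :: 'v
    assume "x \<in> UNIV"
    obtain F z where F: "finite F" "\<forall>m\<in>F. z m \<in> W (lam + ofv m)" "x = (\<Sum>m\<in>F. z m)"
      using decomp_m by blast
    have "z m \<in> span ((\<lambda>(m, v). E m v) ` (UNIV \<times> B))" if m: "m \<in> F" for m
    proof -
      have zU: "E (- m) (z m) \<in> span B" using W_shift F(2) m B(4) by auto
      have "E m (E (- m) (z m)) \<in> span ((\<lambda>(m, v). E m v) ` (UNIV \<times> B))"
      proof (rule lin_image_span[OF E_lin _ zU])
        fix b assume "b \<in> B"
        then show "E m b \<in> span ((\<lambda>(m, v). E m v) ` (UNIV \<times> B))"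
          by (intro span_base image_eqI[of _ _ "(m, b)"]) auto
      qed
      then show ?thesis by (simp add: E_inv2)
    qed
    then show "x \<in> span ((\<lambda>(m, v). E m v) ` (UNIV \<times> B))"
      unfolding F(3) by (intro span_sum) auto
  qed simp
  show "independent ((\<lambda>(m, v). E m v) ` (UNIV \<times> B))"
  proof
    assume "dependent ((\<lambda>(m, v). E m v) ` (UNIV \<times> B))"
    then obtain t u v0 where t: "finite t" "t \<subseteq> (\<lambda>(m, v). E m v) ` (UNIV \<times> B)"
      "(\<Sum>v\<in>t. sc (u v) v) = 0" "v0 \<in> t" "u v0 \<noteq> 0"
      unfolding dependent_explicit by blast
    have img: "\<exists>m b. b \<in> B \<and> x = E m b" if "x \<in> t" for x
    proof -
      have "x \<in> (\<lambda>(m, v). E m v) ` (UNIV \<times> B)" using t(2) that by blast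
      then show ?thesis by auto
    qed
    obtain m0 b0 where v0: "b0 \<in> B" "v0 = E m0 b0" using img[OF t(4)] by blast
    define g where "g v = E (- m0) (pr (lam + ofv m0) v)" for v
    have linG: "lin g" unfolding g_def by (intro lin_comp[OF E_lin pr_lin])
    have gE: "g (E m b) = (if m = m0 then b else 0)" if b: "b \<in> B" for m b
    proof (cases "m = m0")
      case True
      then show ?thesis using pr_same[OF EW[OF b]] by (simp add: g_def E_inv1)
    next
      case False
      then have "lam + ofv m \<noteq> lam + ofv m0" by (simp add: ofv_inj)
      then show ?thesis using pr_other[OF EW[OF b]] False by (simp add: g_def E_zero)
    qed
    have "g (\<Sum>v\<in>t. sc (u v) v) = (\<Sum>v\<in>t. sc (u v) (g v))"
      by (simp add: lin_sum[OF linG] linD[OF linG])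
    then have s0: "(\<Sum>v\<in>t. sc (u v) (g v)) = 0" using t(3) lin_zero[OF linG] by simp
    define c where "c b = (\<Sum>v\<in>{v\<in>t. g v = b}. u v)" for b
    have "(\<Sum>v\<in>t. sc (u v) (g v)) = (\<Sum>b\<in>g ` t. \<Sum>v\<in>{v\<in>t. g v = b}. sc (u v) (g v))"
      by (rule sum.image_gen[OF t(1)])
    also have "\<dots> = (\<Sum>b\<in>g ` t. sc (c b) b)"
      by (rule sum.cong) (auto simp: c_def scale_sum_left intro!: sum.cong)
    also have "\<dots> = (\<Sum>b\<in>g ` t - {0}. sc (c b) b)"
      by (rule sum.mono_neutral_right) (use t(1) in auto)
    finally have s1: "(\<Sum>b\<in>g ` t - {0}. sc (c b) b) = 0" using s0 by simp
    have gt: "g v \<in> B \<union> {0}" if vt: "v \<in> t" for v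
    proof -
      obtain m b where "b \<in> B" "v = E m b" using img[OF vt] by blast
      then show ?thesis using gE by auto
    qed
    have "b0 \<in> g ` t - {0}"
      using gE[OF v0(1), of m0] v0 t(4) B0 by (auto intro!: image_eqI[of _ _ v0])
    moreover have "g ` t - {0} \<subseteq> B" using gt by auto
    ultimately have cb0: "c b0 = 0"
      using independentD[OF B(3) _ _ s1] t(1) by auto
    have uniq: "v = v0" if v: "v \<in> t" "g v = b0" for v
    proof -
      obtain m b where mb: "b \<in> B" "v = E m b" using img[OF v(1)] by blast
      have "(if m = m0 then b else 0) = b0" using v(2) gE[OF mb(1)] mb(2) by simp
      then have "m = m0 \<and> b = b0" using B0 v0(1) by (auto split: if_splits)
      then show "v = v0" using mb v0 by simp
    qed
    have gv0: "g v0 = b0" using gE[OF v0(1), of m0] v0(2) by simp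
    have "{v\<in>t. g v = b0} = {v0}" using uniq gv0 t(4) by blast
    then have "c b0 = u v0" by (simp add: c_def)
    then show False using cb0 t(5) by simp
  qed
qed

lemma T_lin: "lin (Dop E D j s)"
  unfolding Dop_def by (intro lin_comp[OF E_lin D_lin])

lemma T_U: "u \<in> U \<Longrightarrow> Dop E D j s u \<in> U"
  unfolding Dop_def using D_W[of u lam j s] W_shift by simp

lemma D_formula: "v \<in> U \<Longrightarrow> D j s (E m v) = E (m + s) (sc (of_int (m $ j)) v + Dop E D j s v)"
  by (simp add: J3 Dop_def EE linD[OF E_lin])

lemma D_as_E: "D j s u = E s (Dop E D j s u)"
  by (simp add: Dop_def E_inv2)

lemma T0: "u \<in> U \<Longrightarrow> Dop E D j 0 u = sc (lam $ j) u"
  by (simp add: Dop_def W_iff)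

lemma T_bracket:
  assumes u: "u \<in> U"
  shows "Dop E D j s (Dop E D k m u) - Dop E D k m (Dop E D j s u) =
    sc (of_int (m $ j)) (Dop E D k (s + m) u - Dop E D k m u)
    - sc (of_int (s $ k)) (Dop E D j (s + m) u - Dop E D j s u)"
proof -
  let ?T = "Dop E D"
  have a: "D j s (D k m u) = E (m + s) (sc (of_int (m $ j)) (?T k m u) + ?T j s (?T k m u))"
    using D_formula[OF T_U[OF u]] D_as_E[of k m u] by simp
  have b: "D k m (D j s u) = E (s + m) (sc (of_int (s $ k)) (?T j s u) + ?T k m (?T j s u))"
    using D_formula[OF T_U[OF u]] D_as_E[of j s u] by simp
  have c: "D j s (D k m u) - D k m (D j s u) =
     E (s + m) (sc (of_int (m $ j)) (?T k (s + m) u) - sc (of_int (s $ k)) (?T j (s + m) u))"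
    using Dcomm[of j s k m u] D_as_E[of k "s + m" u] D_as_E[of j "s + m" u]
    by (simp add: lin_diff[OF E_lin] linD[OF E_lin])
  have "E (s + m) ((sc (of_int (m $ j)) (?T k m u) + ?T j s (?T k m u))
      - (sc (of_int (s $ k)) (?T j s u) + ?T k m (?T j s u)))
    = E (s + m) (sc (of_int (m $ j)) (?T k (s + m) u) - sc (of_int (s $ k)) (?T j (s + m) u))"
    using a b c by (simp add: lin_diff[OF E_lin] add.commute)
  then have "(sc (of_int (m $ j)) (?T k m u) + ?T j s (?T k m u))
      - (sc (of_int (s $ k)) (?T j s u) + ?T k m (?T j s u))
    = sc (of_int (m $ j)) (?T k (s + m) u) - sc (of_int (s $ k)) (?T j (s + m) u)"
    using E_inj by blast
  then show ?thesis
    by (simp add: scale_right_diff_distrib algebra_simps)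
qed

end

definition ax :: "'n \<Rightarrow> int \<Rightarrow> int^'n" where
  "ax i x = (\<chi> k. if k = i then x else 0)"

lemma ax_add: "ax i x + ax i y = ax i (x + y)"
  by (simp add: ax_def vec_eq_iff)

lemma ax_nth: "ax i x $ k = (if k = i then x else 0)"
  by (simp add: ax_def)

abbreviation PP :: "nat \<Rightarrow> complex poly" where
  "PP N \<equiv> [:-1,1:]^N"

context vs begin

lemma ev_zero_fun: "ev (\<lambda>x. 0) a p = 0"
  by (simp add: ev_def)

lemma ev_shift0: "ev g a p = ev (\<lambda>x. g (a + x)) 0 p"
  using ev_shift[of g a 0 p] by simp

lemma PP_mono:
  assumes "\<forall>b. ev g b (PP N) = 0" "N \<le> M"
  shows "ev g a (PP M) = 0"
proof -
  have "PP M = PP N * PP (M - N)" using assms(2) by (simp add: power_add[symmetric])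
  then show ?thesis using assms(1) by (simp add: ev_mult ev_zero_fun)
qed

lemma PP_weight:
  "smult (of_int a) (PP (Suc N)) + pCons 0 (pderiv (PP (Suc N)))
     = PP N * (smult (of_int a) [:-1,1:] + [:0, of_nat (Suc N):])"
proof -
  have d: "pderiv (PP (Suc N)) = smult (of_nat (Suc N)) (PP N)"
    by (simp only: pderiv_power_Suc) (simp add: pderiv_pCons)
  have e1: "PP (Suc N) = PP N * [:-1,1:]" by (rule power_Suc2)
  have g: "smult c (p * [:-1,1:]) + pCons 0 (smult d p) = p * (smult c [:-1,1:] + [:0, d:])"
    for c d :: complex and p :: "complex poly"
    apply (simp add: algebra_simps mult_pCons_right)
    apply (rule poly_eqI)
    apply (simp add: coeff_pCons algebra_simps split: nat.split)
    done
  show ?thesis unfolding d unfolding e1 by (rule g)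
qed

end

locale catJ2 = catJ1 sc E D lam for sc :: "complex \<Rightarrow> 'v::ab_group_add \<Rightarrow> 'v"
  and E :: "int^'n \<Rightarrow> 'v \<Rightarrow> 'v" and D :: "'n \<Rightarrow> int^'n \<Rightarrow> 'v \<Rightarrow> 'v" and lam +
  fixes B :: "'v set"
  assumes B_fin: "finite B" and B_U: "B \<subseteq> U" and B_ind: "independent B" and B_span: "span B = U"
begin

abbreviation T where "T \<equiv> Dop E D"

lemma axis_core: "core sc U (\<lambda>x. T i (ax i x)) B"
proof unfold_locales
  show "subspace U" by (rule U_sub)
  show "lin (T i (ax i x))" for x by (rule T_lin)
  show "u \<in> U \<Longrightarrow> T i (ax i x) u \<in> U" for u x by (rule T_U)
  show "u \<in> U \<Longrightarrow> T i (ax i x) (T i (ax i y) u) - T i (ax i y) (T i (ax i x) u) =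
       sc (of_int (y - x)) (T i (ax i (x + y)) u) - sc (of_int y) (T i (ax i y) u) + sc (of_int x) (T i (ax i x) u)"
    for u x y
    using T_bracket[of u i "ax i x" i "ax i y"]
    by (simp add: ax_add ax_nth scale_right_diff_distrib scale_left_diff_distrib algebra_simps)
qed (use B_fin B_ind B_span in auto)

lemma axis_main: "\<exists>N. N \<ge> 1 \<and> (\<forall>a. \<forall>u\<in>U. ev (\<lambda>x. T i (ax i x) u) a (PP N) = 0)"
proof -
  interpret C: core sc U "\<lambda>x. T i (ax i x)" B by (rule axis_core)
  obtain N where N: "\<forall>a. \<forall>u\<in>U. C.R a (PP N) u = 0" using C.core_main by blast
  have "\<forall>a. \<forall>u\<in>U. ev (\<lambda>x. T i (ax i x) u) a (PP (N + 1)) = 0"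
  proof (intro allI ballI)
    fix a u assume u: "u \<in> U"
    show "ev (\<lambda>x. T i (ax i x) u) a (PP (N + 1)) = 0"
      by (rule PP_mono[of _ N]) (use N u in \<open>auto simp: C.R_def\<close>)
  qed
  then show ?thesis by (intro exI[of _ "N + 1"]) auto
qed

definition DV :: "nat \<Rightarrow> 'n \<Rightarrow> 'n \<Rightarrow> bool" where
  "DV N j i \<longleftrightarrow> (\<forall>s a u. u \<in> U \<longrightarrow> ev (\<lambda>x. T j (s + ax i x) u) a (PP N) = 0)"

lemma DV_mono: assumes "DV N j i" "N \<le> M" shows "DV M j i"
  unfolding DV_def
proof (intro allI impI)
  fix s a u assume u: "u \<in> U"
  show "ev (\<lambda>x. T j (s + ax i x) u) a (PP M) = 0"
    by (rule PP_mono[of _ N]) (use assms u in \<open>auto simp: DV_def\<close>)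
qed

lemma step_ne:
  assumes A: "\<forall>a. \<forall>u\<in>U. ev (\<lambda>x. T i (ax i x) u) a (PP N) = 0" and N1: "N \<ge> 1" and ji: "j \<noteq> i"
  shows "DV N j i"
proof -
  have core: "ev (\<lambda>x. T j (q + ax i x) u) a (PP N) = 0" if q: "q $ i \<noteq> 0" and u: "u \<in> U" for q a u
  proof -
    have br: "T i (ax i x) (T j q u) - T j q (T i (ax i x) u) =
       sc (of_int (q $ i)) (T j (q + ax i x) u - T j q u)" for x
      using T_bracket[OF u, of i "ax i x" j q] ji by (simp add: ax_nth add.commute)
    have "ev (\<lambda>x. T i (ax i x) (T j q u) - T j q (T i (ax i x) u)) a (PP N) = 0"
      using A T_U[OF u] u lin_zero[OF T_lin]
      by (simp add: ev_diff_f ev_lin[OF T_lin])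
    then have "ev (\<lambda>x. sc (of_int (q $ i)) (T j (q + ax i x) u - T j q u)) a (PP N) = 0"
      by (simp only: br)
    moreover have "poly (PP N) 1 = 0" using N1 by (simp add: poly_power)
    ultimately have "sc (of_int (q $ i)) (ev (\<lambda>x. T j (q + ax i x) u) a (PP N)) = 0"
      using N1 by (simp add: ev_scf ev_diff_f ev_const_fun power_0_left)
    then show ?thesis using q by simp
  qed
  show ?thesis unfolding DV_def
  proof (intro allI impI)
    fix s a u assume u: "u \<in> U"
    show "ev (\<lambda>x. T j (s + ax i x) u) a (PP N) = 0"
    proof (cases "s $ i = 0")
      case False
      then show ?thesis using core u by blast
    next
      case True
      have "ev (\<lambda>x. T j (s + ax i x) u) a (PP N) = ev (\<lambda>x. T j ((s + ax i 1) + ax i x) u) (a - 1) (PP N)"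
        unfolding ev_def by (rule sum.cong) (simp_all add: add.assoc ax_add)
      also have "\<dots> = 0" by (rule core) (use True u in \<open>auto simp: ax_nth\<close>)
      finally show ?thesis .
    qed
  qed
qed

lemma step_eq:
  assumes Dk: "DV N k i" and ki: "k \<noteq> i"
  shows "DV (Suc N) i i"
  unfolding DV_def
proof (intro allI impI)
  fix s a u assume u: "u \<in> U"
  define q where "q = ax k 1"
  define r where "r = s - q"
  have Dk1: "DV (Suc N) k i" using DV_mono[OF Dk] by simp
  define G where "G x = T k (s + ax i x) u - T k (r + ax i x) u" for x
  have br: "T k (r + ax i x) (T i q u) - T i q (T k (r + ax i x) u) =
     (T i (s + ax i x) u - T i q u) - sc (of_int (r $ i)) (G x) - sc (of_int x) (G x)" for x
  proof -
    have "T k (r + ax i x) (T i q u) - T i q (T k (r + ax i x) u) =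
      sc (of_int (q $ k)) (T i (r + ax i x + q) u - T i q u) -
      sc (of_int ((r + ax i x) $ i)) (T k (r + ax i x + q) u - T k (r + ax i x) u)"
      by (rule T_bracket[OF u])
    also have "q $ k = 1" by (simp add: q_def ax_nth)
    also have "(r + ax i x) $ i = r $ i + x" by (simp add: ax_nth)
    also have "r + ax i x + q = s + ax i x" by (simp add: r_def algebra_simps)
    finally show ?thesis by (simp add: G_def of_int_add scale_left_distrib diff_diff_eq)
  qed
  have lhs: "ev (\<lambda>x. T k (r + ax i x) (T i q u) - T i q (T k (r + ax i x) u)) a (PP (Suc N)) = 0"
    using Dk1 T_U[OF u] u lin_zero[OF T_lin] unfolding DV_def
    by (simp add: ev_diff_f ev_lin[OF T_lin])
  have G0: "ev G b (PP N) = 0" for b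
  proof -
    have "ev G b (PP N) = ev (\<lambda>x. T k (s + ax i x) u) b (PP N) - ev (\<lambda>x. T k (r + ax i x) u) b (PP N)"
      unfolding G_def ev_diff_f ..
    also have "\<dots> = 0" using Dk u unfolding DV_def by simp
    finally show ?thesis .
  qed
  have G1: "ev G a (PP (Suc N)) = 0" by (rule PP_mono[of _ N]) (use G0 in auto)
  have G2: "ev (\<lambda>x. sc (of_int x) (G x)) a (PP (Suc N)) = 0"
    unfolding ev_weight PP_weight ev_mult G0 by (rule ev_zero_fun)
  have p1: "poly (PP (Suc N)) 1 = 0" by (simp add: poly_power)
  have "0 = ev (\<lambda>x. (T i (s + ax i x) u - T i q u) - sc (of_int (r $ i)) (G x) - sc (of_int x) (G x)) a (PP (Suc N))"
    using lhs by (simp only: br)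
  also have "\<dots> = ev (\<lambda>x. T i (s + ax i x) u) a (PP (Suc N)) - sc (poly (PP (Suc N)) 1) (T i q u)
     - sc (of_int (r $ i)) (ev G a (PP (Suc N))) - ev (\<lambda>x. sc (of_int x) (G x)) a (PP (Suc N))"
    by (simp only: ev_diff_f ev_scf ev_const_fun)
  also have "\<dots> = ev (\<lambda>x. T i (s + ax i x) u) a (PP (Suc N))"
    by (simp only: p1 G1 G2 scale_zero_left scale_zero_right diff_zero)
  finally show "ev (\<lambda>x. T i (s + ax i x) u) a (PP (Suc N)) = 0" by simp
qed

lemma step_single:
  assumes A: "\<forall>a. \<forall>u\<in>U. ev (\<lambda>x. T i (ax i x) u) a (PP N) = 0" and only: "\<forall>k. k = i"
  shows "DV N i i"
  unfolding DV_def
proof (intro allI impI)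
  fix s a u assume u: "u \<in> U"
  have sax: "s = ax i (s $ i)" using only by (auto simp: ax_def vec_eq_iff)
  have "ev (\<lambda>x. T i (s + ax i x) u) a (PP N) = ev (\<lambda>x. T i (ax i x) u) (s $ i + a) (PP N)"
    unfolding ev_def by (rule sum.cong) (simp_all, subst sax, simp add: ax_add add.assoc)
  then show "ev (\<lambda>x. T i (s + ax i x) u) a (PP N) = 0" using A u by simp
qed

theorem all_DV: "\<exists>N. \<forall>i j. DV N j i"
proof -
  have "\<forall>i. \<exists>N. \<forall>j. DV N j i"
  proof
    fix i
    obtain N where N: "N \<ge> 1" "\<forall>a. \<forall>u\<in>U. ev (\<lambda>x. T i (ax i x) u) a (PP N) = 0"
      using axis_main by blast
    have ne: "DV N j i" if "j \<noteq> i" for j by (rule step_ne[OF N(2) N(1) that])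
    have "DV (Suc N) i i"
    proof (cases "\<exists>k. k \<noteq> i")
      case True
      then obtain k where "k \<noteq> i" by blast
      then show ?thesis using step_eq[OF ne] by blast
    next
      case False
      then show ?thesis using DV_mono[OF step_single[OF N(2)]] by auto
    qed
    then have "\<forall>j. DV (Suc N) j i" using ne DV_mono by (metis le_SucI order_refl)
    then show "\<exists>N. \<forall>j. DV N j i" by blast
  qed
  then obtain Nf where Nf: "\<forall>i j. DV (Nf i) j i" by metis
  define N where "N = (\<Sum>i\<in>UNIV. Nf i)"
  have "Nf i \<le> N" for i unfolding N_def by (rule member_le_sum) auto
  then have "\<forall>i j. DV N j i" using Nf DV_mono by blast
  then show ?thesis by blast
qed

end

context vs begin

lemma ev_PP0: "ev g a (PP 0) = g a"
  by (simp add: ev_def)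

lemma ev_one: "ev g a 1 = g a"
  by (simp add: ev_def)

lemma ev_Delta: "ev (\<lambda>x. g (x + 1) - g x) a (PP N) = ev g a (PP (Suc N))"
proof -
  have "ev (\<lambda>x. g (x + 1)) a (PP N) = ev g (a + 1) (PP N)"
    unfolding ev_def by (simp add: add_ac)
  also have "\<dots> = ev g a (pCons 0 (PP N))" by (simp add: ev_pCons0)
  finally have "ev (\<lambda>x. g (x + 1)) a (PP N) = ev g a (pCons 0 (PP N))" .
  moreover have "PP (Suc N) = pCons 0 (PP N) - PP N" by (simp add: power_Suc2 mult_pCons_right)
  ultimately show ?thesis by (simp add: ev_diff_f ev_diff)
qed

lemma int_const:
  fixes h :: "int \<Rightarrow> 'v"
  assumes "h 0 = 0" "\<And>x. h (x + 1) = h x"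
  shows "h x = 0"
proof (induction x rule: int_induct[of _ 0])
  case base
  then show ?case using assms(1) .
next
  case (step1 i)
  then show ?case using assms(2) by simp
next
  case (step2 i)
  then show ?case using assms(2)[of "i - 1"] by simp
qed

lemma sum_list_split:
  "sum_list (map (\<lambda>(\<kappa>, b, t). sc (\<kappa> * F b) (g (t + 1) - g t)) L) =
   sum_list (map (\<lambda>(\<kappa>, b, t). sc (\<kappa> * F b) (g (t + 1))) L) +
   sum_list (map (\<lambda>(\<kappa>, b, t). sc ((- \<kappa>) * F b) (g t)) L)"
  by (induction L) (auto simp: scale_right_diff_distrib algebra_simps)

lemma sum_list_split2:
  "sum_list (map (\<lambda>(\<kappa>, b, t). sc (\<kappa> * C (Suc b)) (g (t + 1) - g t)) L) =
   sum_list (map (\<lambda>(\<kappa>, b, t). sc (\<kappa> * C b) (g t)) (map (\<lambda>(\<kappa>, b, t). (\<kappa>, Suc b, t + 1)) L)) +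
   sum_list (map (\<lambda>(\<kappa>, b, t). sc (\<kappa> * C b) (g t)) (map (\<lambda>(\<kappa>, b, t). (- \<kappa>, Suc b, t)) L))"
  by (induction L) (auto simp: scale_right_diff_distrib algebra_simps)

lemma newton1:
  "\<exists>L :: (complex \<times> nat \<times> int) list. \<forall>g. (\<forall>a. ev g a (PP N) = 0) \<longrightarrow>
     (\<forall>x. g x = sum_list (map (\<lambda>(\<kappa>, b, t). sc (\<kappa> * ((of_int x :: complex) gchoose b)) (g t)) L))"
proof (induction N)
  case 0
  show ?case by (intro exI[of _ "[]"]) (auto simp: ev_one)
next
  case (Suc N)
  then obtain L where L: "\<forall>g. (\<forall>a. ev g a (PP N) = 0) \<longrightarrow>
     (\<forall>x. g x = sum_list (map (\<lambda>(\<kappa>, b, t). sc (\<kappa> * ((of_int x :: complex) gchoose b)) (g t)) L))" by blast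
  define L' where "L' = (1, 0, 0) # map (\<lambda>(\<kappa>, b, t). (\<kappa>, Suc b, t + 1)) L @ map (\<lambda>(\<kappa>, b, t). (- \<kappa>, Suc b, t)) L"
  show ?case
  proof (intro exI[of _ L'] allI impI)
    fix g :: "int \<Rightarrow> 'v" and x :: int
    assume g: "\<forall>a. ev g a (PP (Suc N)) = 0"
    define dg where "dg x = g (x + 1) - g x" for x
    have "\<forall>a. ev dg a (PP N) = 0"
    proof
      fix a show "ev dg a (PP N) = 0" unfolding dg_def ev_Delta using g by blast
    qed
    then have dgL: "dg y = sum_list (map (\<lambda>(\<kappa>, b, t). sc (\<kappa> * ((of_int y :: complex) gchoose b)) (dg t)) L)" for y
      using L by blast
    define H where "H y = g 0 + sum_list (map (\<lambda>(\<kappa>, b, t). sc (\<kappa> * ((of_int y :: complex) gchoose Suc b)) (dg t)) L)" for y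
    have H0: "H 0 = g 0" unfolding H_def by (induction L) auto
    have gs: "(1 + c) gchoose Suc k = (c gchoose k) + (c gchoose Suc k)" for c :: complex and k
      using gbinomial_Suc_Suc[of c k] by (simp add: add.commute)
    have Hstep: "H (y + 1) - H y = dg y" for y
    proof -
      have "H (y + 1) - H y = sum_list (map (\<lambda>(\<kappa>, b, t). sc (\<kappa> * ((of_int y :: complex) gchoose b)) (dg t)) L)"
        unfolding H_def
        apply (induction L)
         apply simp
        apply (clarsimp simp: gbinomial_Suc_Suc distrib_left scale_left_distrib)
        done
      then show ?thesis using dgL[of y] by simp
    qed
    have "g y - H y = 0" for y
    proof (rule int_const[where h = "\<lambda>y. g y - H y"])
      show "g 0 - H 0 = 0" using H0 by simp
      show "g (y + 1) - H (y + 1) = g y - H y" for y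
        using Hstep[of y] by (simp add: dg_def algebra_simps)
    qed
    then have "g x = H x" by simp
    also have "H x = sum_list (map (\<lambda>(\<kappa>, b, t). sc (\<kappa> * ((of_int x :: complex) gchoose b)) (g t)) L')"
      unfolding H_def L'_def dg_def
      using sum_list_split2[where C = "\<lambda>b. (of_int x :: complex) gchoose b" and g = g and L = L]
      by simp
    finally show "g x = sum_list (map (\<lambda>(\<kappa>, b, t). sc (\<kappa> * ((of_int x :: complex) gchoose b)) (g t)) L')" .
  qed
qed

end

lemma monomial_add: "monomial s (\<alpha> + \<beta>) = monomial s \<alpha> * monomial s \<beta>"
  unfolding monomial_def by (simp add: power_add prod.distrib)

lemma monomial_zero: "monomial s 0 = 1"
  by (simp add: monomial_def)

definition uv :: "'n \<Rightarrow> nat^'n" where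
  "uv i = (\<chi> k. if k = i then 1 else 0)"

lemma monomial_uv: "monomial s (uv i) = of_int (s $ i)"
proof -
  have "monomial s (uv i) = (\<Prod>j\<in>UNIV. if j = i then of_int (s $ j) else 1)"
    unfolding monomial_def uv_def by (intro prod.cong) auto
  also have "\<dots> = of_int (s $ i)" by (subst prod.delta) auto
  finally show ?thesis .
qed

definition PS :: "(int^'n \<Rightarrow> complex) \<Rightarrow> bool" where
  "PS c \<longleftrightarrow> (\<exists>A \<kappa>. finite A \<and> (\<forall>s. c s = (\<Sum>\<alpha>\<in>A. \<kappa> \<alpha> * monomial s \<alpha>)))"

lemma PS_mono: "PS (\<lambda>s. k * monomial s \<alpha>)"
  unfolding PS_def by (intro exI[of _ "{\<alpha>}"] exI[of _ "\<lambda>_. k"]) auto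

lemma PS_zero: "PS (\<lambda>s. 0)"
  unfolding PS_def by (intro exI[of _ "{}"]) auto

lemma PS_add: assumes "PS c" "PS d" shows "PS (\<lambda>s. c s + d s)"
proof -
  obtain A1 k1 where 1: "finite A1" "\<forall>s. c s = (\<Sum>\<alpha>\<in>A1. k1 \<alpha> * monomial s \<alpha>)" using assms(1) PS_def by blast
  obtain A2 k2 where 2: "finite A2" "\<forall>s. d s = (\<Sum>\<alpha>\<in>A2. k2 \<alpha> * monomial s \<alpha>)" using assms(2) PS_def by blast
  define k where "k \<alpha> = (if \<alpha> \<in> A1 then k1 \<alpha> else 0) + (if \<alpha> \<in> A2 then k2 \<alpha> else 0)" for \<alpha>
  have "c s + d s = (\<Sum>\<alpha>\<in>A1 \<union> A2. k \<alpha> * monomial s \<alpha>)" for s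
  proof -
    have a: "(\<Sum>\<alpha>\<in>A1 \<union> A2. (if \<alpha> \<in> A1 then k1 \<alpha> else 0) * monomial s \<alpha>) = (\<Sum>\<alpha>\<in>A1. k1 \<alpha> * monomial s \<alpha>)"
      by (rule sum.mono_neutral_cong_right) (use 1 2 in auto)
    have b: "(\<Sum>\<alpha>\<in>A1 \<union> A2. (if \<alpha> \<in> A2 then k2 \<alpha> else 0) * monomial s \<alpha>) = (\<Sum>\<alpha>\<in>A2. k2 \<alpha> * monomial s \<alpha>)"
      by (rule sum.mono_neutral_cong_right) (use 1 2 in auto)
    show ?thesis using a b 1 2 by (simp add: k_def distrib_right sum.distrib)
  qed
  then show ?thesis unfolding PS_def using 1 2 by blast
qed

lemma PS_sum: "finite I \<Longrightarrow> (\<And>i. i \<in> I \<Longrightarrow> PS (c i)) \<Longrightarrow> PS (\<lambda>s. \<Sum>i\<in>I. c i s)"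
  by (induction I rule: finite_induct) (auto intro: PS_add PS_zero)

lemma PS_mult: assumes "PS c" "PS d" shows "PS (\<lambda>s. c s * d s)"
proof -
  obtain A1 k1 where 1: "finite A1" "\<forall>s. c s = (\<Sum>\<alpha>\<in>A1. k1 \<alpha> * monomial s \<alpha>)" using assms(1) PS_def by blast
  obtain A2 k2 where 2: "finite A2" "\<forall>s. d s = (\<Sum>\<alpha>\<in>A2. k2 \<alpha> * monomial s \<alpha>)" using assms(2) PS_def by blast
  have e: "c s * d s = (\<Sum>\<beta>\<in>A2. \<Sum>\<alpha>\<in>A1. (k1 \<alpha> * k2 \<beta>) * monomial s (\<alpha> + \<beta>))" for s
    using 1 2 by (simp add: sum_distrib_left sum_distrib_right monomial_add mult_ac)
  have "PS (\<lambda>s. \<Sum>\<beta>\<in>A2. \<Sum>\<alpha>\<in>A1. (k1 \<alpha> * k2 \<beta>) * monomial s (\<alpha> + \<beta>))"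
    using 1 2 by (intro PS_sum PS_mono)
  then show ?thesis using e by simp
qed

lemma PS_prod: "finite I \<Longrightarrow> (\<And>i. i \<in> I \<Longrightarrow> PS (c i)) \<Longrightarrow> PS (\<lambda>s. \<Prod>i\<in>I. c i s)"
proof (induction I rule: finite_induct)
  case empty
  then show ?case using PS_mono[of 1 0] by (simp add: monomial_zero)
next
  case (insert x F)
  then show ?case by (simp add: PS_mult)
qed

lemma PS_const: "PS (\<lambda>s. k)"
  using PS_mono[of k 0] by (simp add: monomial_zero)

lemma PS_var: "PS (\<lambda>s. of_int (s $ i))"
  using PS_mono[of 1 "uv i"] by (simp add: monomial_uv)

lemma PS_gch: "PS (\<lambda>s. (of_int (s $ i) :: complex) gchoose b)"
proof -
  have "PS (\<lambda>s. \<Prod>k = 0..<b. (of_int (s $ i) - of_nat k) / of_nat (b - k) :: complex)"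
  proof (rule PS_prod)
    fix k
    have "PS (\<lambda>s. of_int (s $ i) * (1 / of_nat (b - k)) + (- of_nat k / of_nat (b - k)) :: complex)"
      by (intro PS_add PS_mult PS_var PS_const)
    then show "PS (\<lambda>s. (of_int (s $ i) - of_nat k) / of_nat (b - k) :: complex)"
      by (simp add: diff_divide_distrib)
  qed simp
  then show ?thesis by (simp add: gbinomial_altdef_of_nat)
qed

definition mix :: "'n set \<Rightarrow> int^'n \<Rightarrow> int^'n \<Rightarrow> int^'n" where
  "mix S s c = (\<chi> k. if k \<in> S then s $ k else c $ k)"

definition upd :: "int^'n \<Rightarrow> 'n \<Rightarrow> int \<Rightarrow> int^'n" where
  "upd c i x = (\<chi> k. if k = i then x else c $ k)"

context catJ2 begin

definition PF :: "(int^'n \<Rightarrow> 'v \<Rightarrow> 'v) \<Rightarrow> bool" where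
  "PF g \<longleftrightarrow> (\<exists>A X. finite A \<and> (\<forall>\<alpha>. lin (X \<alpha>) \<and> (\<forall>u\<in>U. X \<alpha> u \<in> U)) \<and>
      (\<forall>s. \<forall>u\<in>U. g s u = (\<Sum>\<alpha>\<in>A. sc (monomial s \<alpha>) (X \<alpha> u))))"

lemma PF_cong: "PF g \<Longrightarrow> (\<And>s u. u \<in> U \<Longrightarrow> h s u = g s u) \<Longrightarrow> PF h"
  unfolding PF_def by metis

lemma PF_zero: "PF (\<lambda>s u. 0)"
  unfolding PF_def by (intro exI[of _ "{}"] exI[of _ "\<lambda>_ _. 0"]) (auto simp: lin_0 subspace_0[OF U_sub])

lemma PF_add: assumes "PF g" "PF h" shows "PF (\<lambda>s u. g s u + h s u)"
proof -
  obtain A1 X1 where 1: "finite A1" "\<forall>\<alpha>. lin (X1 \<alpha>) \<and> (\<forall>u\<in>U. X1 \<alpha> u \<in> U)"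
    "\<forall>s. \<forall>u\<in>U. g s u = (\<Sum>\<alpha>\<in>A1. sc (monomial s \<alpha>) (X1 \<alpha> u))" using assms(1) PF_def by blast
  obtain A2 X2 where 2: "finite A2" "\<forall>\<alpha>. lin (X2 \<alpha>) \<and> (\<forall>u\<in>U. X2 \<alpha> u \<in> U)"
    "\<forall>s. \<forall>u\<in>U. h s u = (\<Sum>\<alpha>\<in>A2. sc (monomial s \<alpha>) (X2 \<alpha> u))" using assms(2) PF_def by blast
  define Y1 where "Y1 \<alpha> = (if \<alpha> \<in> A1 then X1 \<alpha> else (\<lambda>u. 0))" for \<alpha>
  define Y2 where "Y2 \<alpha> = (if \<alpha> \<in> A2 then X2 \<alpha> else (\<lambda>u. 0))" for \<alpha>
  define X where "X \<alpha> u = Y1 \<alpha> u + Y2 \<alpha> u" for \<alpha> u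
  have linX: "lin (X \<alpha>) \<and> (\<forall>u\<in>U. X \<alpha> u \<in> U)" for \<alpha>
    unfolding X_def Y1_def Y2_def using 1(2) 2(2)
    by (auto intro!: lin_add lin_0 subspace_add[OF U_sub] simp: subspace_0[OF U_sub])
  have "g s u + h s u = (\<Sum>\<alpha>\<in>A1 \<union> A2. sc (monomial s \<alpha>) (X \<alpha> u))" if u: "u \<in> U" for s u
  proof -
    have a: "(\<Sum>\<alpha>\<in>A1 \<union> A2. sc (monomial s \<alpha>) (Y1 \<alpha> u)) = (\<Sum>\<alpha>\<in>A1. sc (monomial s \<alpha>) (X1 \<alpha> u))"
      by (rule sum.mono_neutral_cong_right) (use 1 2 in \<open>auto simp: Y1_def\<close>)
    have b: "(\<Sum>\<alpha>\<in>A1 \<union> A2. sc (monomial s \<alpha>) (Y2 \<alpha> u)) = (\<Sum>\<alpha>\<in>A2. sc (monomial s \<alpha>) (X2 \<alpha> u))"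
      by (rule sum.mono_neutral_cong_right) (use 1 2 in \<open>auto simp: Y2_def\<close>)
    show ?thesis using a b 1(3) 2(3) u by (simp add: X_def scale_right_distrib sum.distrib)
  qed
  then show ?thesis unfolding PF_def using 1(1) 2(1) linX by (intro exI[of _ "A1 \<union> A2"] exI[of _ X]) auto
qed

lemma PF_sum: "finite I \<Longrightarrow> (\<And>i. i \<in> I \<Longrightarrow> PF (g i)) \<Longrightarrow> PF (\<lambda>s u. \<Sum>i\<in>I. g i s u)"
  by (induction I rule: finite_induct) (auto intro: PF_add PF_zero)

lemma PF_sum_list: "(\<And>x. x \<in> set L \<Longrightarrow> PF (F x)) \<Longrightarrow> PF (\<lambda>s u. sum_list (map (\<lambda>x. F x s u) L))"
  by (induction L) (auto intro: PF_add PF_zero)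

lemma PF_mono: "lin Y \<Longrightarrow> (\<And>u. u \<in> U \<Longrightarrow> Y u \<in> U) \<Longrightarrow> PF (\<lambda>s u. sc (monomial s \<gamma>) (Y u))"
  unfolding PF_def
  by (intro exI[of _ "{\<gamma>}"] exI[of _ "\<lambda>_. Y"]) auto

lemma PF_PS: assumes "PS c" "PF g" shows "PF (\<lambda>s u. sc (c s) (g s u))"
proof -
  obtain A1 k1 where 1: "finite A1" "\<forall>s. c s = (\<Sum>\<alpha>\<in>A1. k1 \<alpha> * monomial s \<alpha>)" using assms(1) PS_def by blast
  obtain A2 X2 where 2: "finite A2" "\<forall>\<alpha>. lin (X2 \<alpha>) \<and> (\<forall>u\<in>U. X2 \<alpha> u \<in> U)"
    "\<forall>s. \<forall>u\<in>U. g s u = (\<Sum>\<alpha>\<in>A2. sc (monomial s \<alpha>) (X2 \<alpha> u))" using assms(2) PF_def by blast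
  have e: "sc (c s) (g s u) = (\<Sum>\<alpha>\<in>A2. \<Sum>\<beta>\<in>A1. sc (monomial s (\<alpha> + \<beta>)) (sc (k1 \<beta>) (X2 \<alpha> u)))"
    if "u \<in> U" for s u
    using 1 2 that by (simp add: scale_sum_left scale_sum_right sum_distrib_left sum_distrib_right monomial_add mult_ac)
  have "PF (\<lambda>s u. \<Sum>\<alpha>\<in>A2. \<Sum>\<beta>\<in>A1. sc (monomial s (\<alpha> + \<beta>)) (sc (k1 \<beta>) (X2 \<alpha> u)))"
    using 1 2 by (intro PF_sum PF_mono lin_scale subspace_scale[OF U_sub]) auto
  then show ?thesis using e by (rule PF_cong)
qed

lemma PF_T: "PF (T j)"
proof -
  obtain N where N: "\<forall>i j. DV N j i" using all_DV by blast
  obtain L where L: "\<forall>g. (\<forall>a. ev g a (PP N) = 0) \<longrightarrow>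
     (\<forall>x. g x = sum_list (map (\<lambda>(\<kappa>, b, t). sc (\<kappa> * ((of_int x :: complex) gchoose b)) (g t)) L))"
    using newton1 by blast
  have IND: "finite S \<Longrightarrow> \<forall>c. PF (\<lambda>s. T j (mix S s c))" for S
  proof (induction S rule: finite_induct)
    case empty
    show ?case
    proof
      fix c
      show "PF (\<lambda>s. T j (mix {} s c))"
        unfolding PF_def
        by (intro exI[of _ "{0}"] exI[of _ "\<lambda>_. T j c"]) (auto simp: mix_def monomial_zero T_lin T_U)
    qed
  next
    case (insert i S)
    show ?case
    proof
      fix c
      have key: "T j (mix (insert i S) s c) u =
        sum_list (map (\<lambda>(\<kappa>, b, t). sc (\<kappa> * ((of_int (s $ i) :: complex) gchoose b)) (T j (mix S s (upd c i t)) u)) L)"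
        if u: "u \<in> U" for s u
      proof -
        define g where "g x = T j (mix S s (upd c i x)) u" for x
        define s0 where "s0 = mix S s (upd c i 0)"
        have gx: "g x = T j (s0 + ax i x) u" for x
          unfolding g_def s0_def
          by (rule arg_cong[where f = "\<lambda>z. T j z u"]) (use insert.hyps in \<open>auto simp: mix_def upd_def ax_def vec_eq_iff\<close>)
        have "\<forall>a. ev g a (PP N) = 0"
        proof
          fix a
          have "ev g a (PP N) = ev (\<lambda>x. T j (s0 + ax i x) u) a (PP N)" by (rule ev_cong) (rule gx)
          also have "\<dots> = 0" using N[rule_format, of j i] u unfolding DV_def by blast
          finally show "ev g a (PP N) = 0" .
        qed
        then have "g (s $ i) = sum_list (map (\<lambda>(\<kappa>, b, t). sc (\<kappa> * ((of_int (s $ i) :: complex) gchoose b)) (g t)) L)"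
          using L[rule_format, of g] by blast
        moreover have "g (s $ i) = T j (mix (insert i S) s c) u"
          unfolding g_def by (rule arg_cong[where f = "\<lambda>z. T j z u"]) (auto simp: mix_def upd_def vec_eq_iff)
        ultimately show ?thesis by (simp add: g_def)
      qed
      define F where "F = (\<lambda>(\<kappa>::complex, b::nat, t::int) (s::int^'n) (u::'v).
         sc (\<kappa> * ((of_int (s $ i) :: complex) gchoose b)) (T j (mix S s (upd c i t)) u))"
      have Fe: "F x s u = (case x of (\<kappa>, b, t) \<Rightarrow> sc (\<kappa> * ((of_int (s $ i) :: complex) gchoose b)) (T j (mix S s (upd c i t)) u))"
        for x s u by (cases x) (simp add: F_def)
      have PFs: "PF (\<lambda>s u. sum_list (map (\<lambda>x. F x s u) L))"
      proof (rule PF_sum_list)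
        fix x assume "x \<in> set L"
        obtain \<kappa> b t where x: "x = (\<kappa>, b, t)" by (cases x) auto
        have "PF (\<lambda>s u. sc (\<kappa> * ((of_int (s $ i) :: complex) gchoose b)) (T j (mix S s (upd c i t)) u))"
          by (rule PF_PS[OF PS_mult[OF PS_const PS_gch]]) (use insert.IH in blast)
        then show "PF (F x)" by (simp add: x F_def)
      qed
      show "PF (\<lambda>s. T j (mix (insert i S) s c))"
      proof (rule PF_cong[OF PFs])
        fix s u assume u: "u \<in> U"
        have E1: "map (\<lambda>x. F x s u) L = map (\<lambda>(\<kappa>, b, t). sc (\<kappa> * ((of_int (s $ i) :: complex) gchoose b)) (T j (mix S s (upd c i t)) u)) L"
          by (simp only: Fe)
        show "T j (mix (insert i S) s c) u = sum_list (map (\<lambda>x. F x s u) L)"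
          unfolding E1 by (rule key[OF u])
      qed
    qed
  qed
  have fu: "finite (UNIV :: 'n set)" by simp
  have "\<forall>c. PF (\<lambda>s. T j (mix UNIV s c))" by (rule IND[OF fu])
  then have P: "PF (\<lambda>s. T j (mix UNIV s 0))" by (rule spec)
  have m: "mix UNIV s 0 = s" for s by (simp add: mix_def vec_eq_iff)
  show ?thesis using P by (simp only: m)
qed

end

lemma sum_set_nth: assumes "distinct xs" shows "sum g (set xs) = (\<Sum>l<length xs. g (xs ! l))"
proof -
  have inj: "inj_on (nth xs) {..<length xs}" using assms by (auto simp: inj_on_def distinct_conv_nth)
  have im: "nth xs ` {..<length xs} = set xs" using nth_image[of "length xs" xs] by (simp add: atLeast0LessThan)
  show ?thesis using sum.reindex[OF inj, of g] im by (simp add: comp_def)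
qed

lemma uv_nz: "uv i \<noteq> (0 :: nat^'n)"
  by (auto simp: uv_def vec_eq_iff)

context catJ2 begin

lemma PF_T_ex: "\<exists>A C. finite A \<and> (\<forall>\<alpha>. lin (C \<alpha>) \<and> (\<forall>u\<in>U. C \<alpha> u \<in> U)) \<and>
      (\<forall>s. \<forall>u\<in>U. T j s u = (\<Sum>\<alpha>\<in>A. sc (monomial s \<alpha>) (C \<alpha> u)))"
  using PF_T[of j] unfolding PF_def by blast

lemma rep_expand:
  assumes bl: "distinct bl" "set bl = B" and w: "w \<in> U"
  shows "w = (\<Sum>l<length bl. sc (representation B w (bl ! l)) (bl ! l))"
proof -
  have "w \<in> span B" using w B_span by simp
  then have "(\<Sum>b\<in>B. sc (representation B w b) b) = w"
    using sum_representation_eq[OF B_ind _ B_fin subset_refl] by blast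
  moreover have "(\<Sum>b\<in>B. sc (representation B w b) b) = (\<Sum>l<length bl. sc (representation B w (bl ! l)) (bl ! l))"
    unfolding bl(2)[symmetric] by (rule sum_set_nth[OF bl(1)])
  ultimately show ?thesis by simp
qed

lemma poly_mod: "polynomial_module sc E D"
proof -
  obtain bl where bl: "set bl = B" "distinct bl" using finite_distinct_list[OF B_fin] by blast
  have "\<forall>j. \<exists>AC. finite (fst AC) \<and> (\<forall>\<alpha>. lin (snd AC \<alpha>) \<and> (\<forall>u\<in>U. snd AC \<alpha> u \<in> U)) \<and>
      (\<forall>s. \<forall>u\<in>U. T j s u = (\<Sum>\<alpha>\<in>fst AC. sc (monomial s \<alpha>) (snd AC \<alpha> u)))"
  proof
    fix j
    obtain A C where "finite A \<and> (\<forall>\<alpha>. lin (C \<alpha>) \<and> (\<forall>u\<in>U. C \<alpha> u \<in> U)) \<and>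
      (\<forall>s. \<forall>u\<in>U. T j s u = (\<Sum>\<alpha>\<in>A. sc (monomial s \<alpha>) (C \<alpha> u)))" using PF_T_ex[of j] by blast
    then show "\<exists>AC. finite (fst AC) \<and> (\<forall>\<alpha>. lin (snd AC \<alpha>) \<and> (\<forall>u\<in>U. snd AC \<alpha> u \<in> U)) \<and>
      (\<forall>s. \<forall>u\<in>U. T j s u = (\<Sum>\<alpha>\<in>fst AC. sc (monomial s \<alpha>) (snd AC \<alpha> u)))"
      by (intro exI[of _ "(A, C)"]) simp
  qed
  from choice[OF this] obtain AC where AC: "\<forall>j. finite (fst (AC j)) \<and> (\<forall>\<alpha>. lin (snd (AC j) \<alpha>) \<and> (\<forall>u\<in>U. snd (AC j) \<alpha> u \<in> U)) \<and>
      (\<forall>s. \<forall>u\<in>U. T j s u = (\<Sum>\<alpha>\<in>fst (AC j). sc (monomial s \<alpha>) (snd (AC j) \<alpha> u)))" by blast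
  define Af where "Af j = fst (AC j)" for j
  define Cf where "Cf j = snd (AC j)" for j
  have Af: "finite (Af j)" for j using AC by (simp add: Af_def)
  have Cf: "lin (Cf j \<alpha>)" "u \<in> U \<Longrightarrow> Cf j \<alpha> u \<in> U" for j \<alpha> u using AC by (auto simp: Cf_def)
  have TC: "u \<in> U \<Longrightarrow> T j s u = (\<Sum>\<alpha>\<in>Af j. sc (monomial s \<alpha>) (Cf j \<alpha> u))" for j s u
    using AC by (simp add: Af_def Cf_def)
  define rp where "rp j \<alpha> r l = representation B (Cf j \<alpha> (bl ! r)) (bl ! l)" for j \<alpha> r l
  define f where "f j r l s m = of_int (m $ j) * (if r = l then 1 else 0) + (\<Sum>\<alpha>\<in>Af j. monomial s \<alpha> * rp j \<alpha> r l)"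
    for j r l and s m :: "int^'n"
  have pf: "poly_fun2 (f j r l)" for j r l
  proof -
    define A' where "A' = (\<lambda>\<alpha>. (\<alpha>, 0 :: nat^'n)) ` Af j \<union> {(0, uv j)}"
    define c where "c = (\<lambda>(\<alpha>, \<beta>). if \<beta> = uv j then (if r = l then 1 else 0) else rp j \<alpha> r l)"
    have "f j r l s m = (\<Sum>(\<alpha>, \<beta>)\<in>A'. c (\<alpha>, \<beta>) * monomial s \<alpha> * monomial m \<beta>)" for s m
    proof -
      have disj: "(\<lambda>\<alpha>. (\<alpha>, 0 :: nat^'n)) ` Af j \<inter> {(0, uv j)} = {}" using uv_nz[of j] by auto
      have "(\<Sum>(\<alpha>, \<beta>)\<in>A'. c (\<alpha>, \<beta>) * monomial s \<alpha> * monomial m \<beta>) =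
          (\<Sum>(\<alpha>, \<beta>)\<in>(\<lambda>\<alpha>. (\<alpha>, 0 :: nat^'n)) ` Af j. c (\<alpha>, \<beta>) * monomial s \<alpha> * monomial m \<beta>)
          + c (0, uv j) * monomial s 0 * monomial m (uv j)"
        unfolding A'_def using Af disj by (subst sum.union_disjoint) auto
      also have "(\<Sum>(\<alpha>, \<beta>)\<in>(\<lambda>\<alpha>. (\<alpha>, 0 :: nat^'n)) ` Af j. c (\<alpha>, \<beta>) * monomial s \<alpha> * monomial m \<beta>)
          = (\<Sum>\<alpha>\<in>Af j. rp j \<alpha> r l * monomial s \<alpha>)"
        by (subst sum.reindex) (auto simp: inj_on_def c_def monomial_zero uv_nz[of j, symmetric])
      finally show ?thesis
        by (simp add: f_def c_def monomial_zero monomial_uv mult_ac)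
    qed
    moreover have "finite A'" using Af by (simp add: A'_def)
    ultimately show ?thesis unfolding poly_fun2_def by blast
  qed
  have eq: "D j s (E m (bl ! r)) = (\<Sum>l<length bl. sc (f j r l s m) (E (m + s) (bl ! l)))"
    if r: "r < length bl" for j s m r
  proof -
    have br: "bl ! r \<in> U" using r bl B_U nth_mem by blast
    have "(\<Sum>l<length bl. sc (if r = l then 1 else 0) (bl ! l)) = (\<Sum>l<length bl. if r = l then bl ! l else 0)"
      by (rule sum.cong) auto
    also have "\<dots> = bl ! r" using r by (simp add: sum.delta)
    finally have "bl ! r = (\<Sum>l<length bl. sc (if r = l then 1 else 0) (bl ! l))" by simp
    moreover have "T j s (bl ! r) = (\<Sum>l<length bl. sc (\<Sum>\<alpha>\<in>Af j. monomial s \<alpha> * rp j \<alpha> r l) (bl ! l))"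
    proof -
      have "T j s (bl ! r) = (\<Sum>\<alpha>\<in>Af j. sc (monomial s \<alpha>) (Cf j \<alpha> (bl ! r)))" by (rule TC[OF br])
      also have "\<dots> = (\<Sum>\<alpha>\<in>Af j. sc (monomial s \<alpha>) (\<Sum>l<length bl. sc (rp j \<alpha> r l) (bl ! l)))"
        unfolding rp_def
        by (intro sum.cong refl arg_cong[where f = "sc _"] rep_expand[OF bl(2) bl(1) Cf(2)[OF br]])
      also have "\<dots> = (\<Sum>l<length bl. sc (\<Sum>\<alpha>\<in>Af j. monomial s \<alpha> * rp j \<alpha> r l) (bl ! l))"
        unfolding scale_sum_right by (subst sum.swap) (simp add: scale_sum_left scale_scale)
      finally show ?thesis .
    qed
    ultimately have "sc (of_int (m $ j)) (bl ! r) + T j s (bl ! r) = (\<Sum>l<length bl. sc (f j r l s m) (bl ! l))"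
      by (simp add: f_def scale_sum_right scale_left_distrib sum.distrib)
    then show ?thesis
      using D_formula[OF br, of j s m] by (simp add: lin_sum[OF E_lin] linD[OF E_lin])
  qed
  show ?thesis unfolding polynomial_module_def
  proof (intro exI[of _ bl] conjI exI[of _ f] allI impI)
    show "distinct bl" by (rule bl(2))
    show "F_basis sc E (set bl)" using F_basis_B[OF B_fin B_U B_ind B_span] bl(1) by simp
  qed (use pf eq in auto)
qed

end

theorem theorem2:
  fixes sc :: "complex \<Rightarrow> 'v::ab_group_add \<Rightarrow> 'v"
    and E :: "int^'n \<Rightarrow> 'v \<Rightarrow> 'v"
    and D :: "'n \<Rightarrow> int^'n \<Rightarrow> 'v \<Rightarrow> 'v"
  assumes "cat_J sc E D"
    and "indecomposable sc E D"
  shows "polynomial_module sc E D \<and>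
    (\<exists>lam :: complex^'n.
       (\<exists>B. finite B \<and> B \<subseteq> weight_space sc D lam \<and> \<not> module.dependent sc B \<and>
            module.span sc B = weight_space sc D lam \<and> F_basis sc E B) \<and>
       (\<forall>j s. Dop E D j s ` weight_space sc D lam \<subseteq> weight_space sc D lam) \<and>
       (\<forall>j s m v. v \<in> weight_space sc D lam \<longrightarrow>
          D j s (E m v) = E (m + s) (sc (of_int (m $ j)) v + Dop E D j s v)) \<and>
       (\<forall>j. \<exists>A :: (nat^'n) set. \<exists>C :: nat^'n \<Rightarrow> 'v \<Rightarrow> 'v. finite A \<and>
          (\<forall>\<alpha>. Vector_Spaces.linear sc sc (C \<alpha>) \<and>
                C \<alpha> ` weight_space sc D lam \<subseteq> weight_space sc D lam) \<and>
          (\<forall>s. \<forall>u\<in>weight_space sc D lam. Dop E D j s u = (\<Sum>\<alpha>\<in>A. sc (monomial s \<alpha>) (C \<alpha> u)))) \<and>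
       (\<forall>j. \<forall>u\<in>weight_space sc D lam. Dop E D j 0 u = sc (lam $ j) u))"
proof -
  have vsp: "vector_space sc" using assms(1) by (simp add: cat_J_def)
  interpret catJ sc E D
    by unfold_locales (use vsp assms(1) in \<open>auto simp: vector_space_def\<close>)
  obtain lam where lam: "W lam \<noteq> {0}" "\<And>\<mu>. W \<mu> \<noteq> {0} \<Longrightarrow> \<exists>m. \<mu> = lam + ofv m"
    using single_coset[OF assms(2)] by blast
  interpret catJ1 sc E D lam by unfold_locales (use lam in auto)
  obtain B where B: "finite B" "B \<subseteq> U" "independent B" "span B = U" using U_fin by blast
  interpret catJ2 sc E D lam B by unfold_locales (use B in auto)
  have polyC: "\<exists>A :: (nat^'n) set. \<exists>C :: nat^'n \<Rightarrow> 'v \<Rightarrow> 'v. finite A \<and>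
          (\<forall>\<alpha>. Vector_Spaces.linear sc sc (C \<alpha>) \<and> C \<alpha> ` U \<subseteq> U) \<and>
          (\<forall>s. \<forall>u\<in>U. Dop E D j s u = (\<Sum>\<alpha>\<in>A. sc (monomial s \<alpha>) (C \<alpha> u)))" for j
  proof -
    obtain A C where AC: "finite A" "\<forall>\<alpha>. lin (C \<alpha>) \<and> (\<forall>u\<in>U. C \<alpha> u \<in> U)"
      "\<forall>s. \<forall>u\<in>U. T j s u = (\<Sum>\<alpha>\<in>A. sc (monomial s \<alpha>) (C \<alpha> u))"
      using PF_T_ex[of j] by blast
    show ?thesis
      by (intro exI[of _ A] exI[of _ C] conjI allI) (use AC lin_iff in auto)
  qed
  show ?thesis
  proof (intro conjI exI[of _ lam])
    show "polynomial_module sc E D" by (rule poly_mod)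
    show "\<exists>B. finite B \<and> B \<subseteq> U \<and> independent B \<and> span B = U \<and> F_basis sc E B"
      using B F_basis_B[OF B] by blast
    show "\<forall>j s. Dop E D j s ` U \<subseteq> U" using T_U by blast
    show "\<forall>j s m v. v \<in> U \<longrightarrow> D j s (E m v) = E (m + s) (sc (of_int (m $ j)) v + Dop E D j s v)"
      using D_formula by blast
    show "\<forall>j. \<exists>A :: (nat^'n) set. \<exists>C :: nat^'n \<Rightarrow> 'v \<Rightarrow> 'v. finite A \<and>
          (\<forall>\<alpha>. Vector_Spaces.linear sc sc (C \<alpha>) \<and> C \<alpha> ` U \<subseteq> U) \<and>
          (\<forall>s. \<forall>u\<in>U. Dop E D j s u = (\<Sum>\<alpha>\<in>A. sc (monomial s \<alpha>) (C \<alpha> u)))"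
      using polyC by blast
    show "\<forall>j. \<forall>u\<in>U. Dop E D j 0 u = sc (lam $ j) u" using T0 by blast
  qed
qed

end
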